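(* A $4$-dimensional $pp$-wave $g_{ppw}=2\,du\,dv+H(u,x_1,x_2)\,du^2+dx_1^2+dx_2^2$ is (locally) isotropically conformally Einstein if and only if its Weyl tensor is harmonic, $\operatorname{div}W=0$.
   Context: A Lorentzian metric $g$ is isotropically conformally Einstein if (locally) there is a smooth function $f$ with $\nabla f$ nowhere zero and null, $g(\nabla f,\nabla f)=0$, such that $e^{-f}g$ is an Einstein metric; equivalently, $\operatorname{Hes}_f+\rho+\frac12 df\otimes df=\lambda g$ for some function $\lambda$ (quasi-Einstein equation with $\mu=-\frac12$), where $\rho$ is the Ricci tensor and $\operatorname{Hes}_f=\nabla df$. $W$ denotes the Weyl conformal curvature tensor and $\operatorname{div}W(X,Y,Z)=-\frac12\{(\nabla_X\rho)(Y,Z)-(\nabla_Y\rho)(X,Z)\}+\frac1{12}\{X(\tau)g(Y,Z)-Y(\tau)g(X,Z)\}$ with $\tau$ the scalar curvature. *)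

theory Defs
  imports "HOL-Analysis.Analysis"
begin

text \<open>Coordinates (u, v, x1, x2) on the 4-dimensional spacetime and (u, x1, x2) on the
  domain of the profile function H.\<close>

datatype coord = U | V | X1 | X2
datatype coord3 = U3 | X13 | X23

lemma UNIV_coord: "(UNIV :: coord set) = {U, V, X1, X2}"
  using coord.exhaust by auto

lemma UNIV_coord3: "(UNIV :: coord3 set) = {U3, X13, X23}"
  using coord3.exhaust by auto

instance coord :: finite
  by standard (simp add: UNIV_coord)

instance coord3 :: finite
  by standard (simp add: UNIV_coord3)

definition pd :: "'n::finite \<Rightarrow> (real^'n \<Rightarrow> real) \<Rightarrow> real^'n \<Rightarrow> real" where
  "pd i F p = deriv (\<lambda>t. F (p + t *\<^sub>R axis i 1)) 0"

fun pds :: "'n::finite list \<Rightarrow> (real^'n \<Rightarrow> real) \<Rightarrow> real^'n \<Rightarrow> real" where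
  "pds [] F = F"
| "pds (i # is) F = pd i (pds is F)"

definition Cinf_on :: "(real^'n::finite) set \<Rightarrow> (real^'n \<Rightarrow> real) \<Rightarrow> bool" where
  "Cinf_on S F \<longleftrightarrow> (\<forall>is. pds is F differentiable_on S)"

type_synonym 'n metric = "real^'n \<Rightarrow> real^'n^'n"

definition ginv :: "'n::finite metric \<Rightarrow> real^'n \<Rightarrow> real^'n^'n" where
  "ginv g p = matrix_inv (g p)"

definition chr :: "'n::finite metric \<Rightarrow> 'n \<Rightarrow> 'n \<Rightarrow> 'n \<Rightarrow> real^'n \<Rightarrow> real" where
  "chr g k i j p = (1/2) * (\<Sum>l\<in>UNIV. ginv g p $ k $ l *
      (pd i (\<lambda>q. g q $ j $ l) p + pd j (\<lambda>q. g q $ i $ l) p - pd l (\<lambda>q. g q $ i $ j) p))"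

definition ricci :: "'n::finite metric \<Rightarrow> 'n \<Rightarrow> 'n \<Rightarrow> real^'n \<Rightarrow> real" where
  "ricci g i j p = (\<Sum>k\<in>UNIV. pd k (chr g k i j) p - pd j (chr g k i k) p
      + (\<Sum>l\<in>UNIV. chr g k k l p * chr g l i j p - chr g k j l p * chr g l i k p))"

definition scal :: "'n::finite metric \<Rightarrow> real^'n \<Rightarrow> real" where
  "scal g p = (\<Sum>i\<in>UNIV. \<Sum>j\<in>UNIV. ginv g p $ i $ j * ricci g i j p)"

definition hess :: "'n::finite metric \<Rightarrow> (real^'n \<Rightarrow> real) \<Rightarrow> 'n \<Rightarrow> 'n \<Rightarrow> real^'n \<Rightarrow> real" where
  "hess g f i j p = pd i (pd j f) p - (\<Sum>k\<in>UNIV. chr g k i j p * pd k f p)"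

definition cov_ricci :: "'n::finite metric \<Rightarrow> 'n \<Rightarrow> 'n \<Rightarrow> 'n \<Rightarrow> real^'n \<Rightarrow> real" where
  "cov_ricci g k i j p = pd k (ricci g i j) p
      - (\<Sum>l\<in>UNIV. chr g l k i p * ricci g l j p + chr g l k j p * ricci g i l p)"

text \<open>Divergence of the Weyl tensor (4-dimensional formula from the paper).\<close>
definition divW :: "'n::finite metric \<Rightarrow> 'n \<Rightarrow> 'n \<Rightarrow> 'n \<Rightarrow> real^'n \<Rightarrow> real" where
  "divW g i j k p = - (1/2) * (cov_ricci g i j k p - cov_ricci g j i k p)
      + (1/12) * (pd i (scal g) p * g p $ j $ k - pd j (scal g) p * g p $ i $ k)"

definition grad :: "'n::finite metric \<Rightarrow> (real^'n \<Rightarrow> real) \<Rightarrow> real^'n \<Rightarrow> real^'n" where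
  "grad g f p = ginv g p *v (\<chi> i. pd i f p)"

definition gval :: "'n::finite metric \<Rightarrow> real^'n \<Rightarrow> real^'n \<Rightarrow> real^'n \<Rightarrow> real" where
  "gval g p X Y = (\<Sum>i\<in>UNIV. \<Sum>j\<in>UNIV. g p $ i $ j * X $ i * Y $ j)"

text \<open>Locally isotropically conformally Einstein on Omega: around every point of Omega there is
  a smooth f with nowhere-zero null gradient solving the quasi-Einstein equation with mu = -1/2.\<close>
definition loc_iso_conf_einstein :: "'n::finite metric \<Rightarrow> (real^'n) set \<Rightarrow> bool" where
  "loc_iso_conf_einstein g \<Omega> \<longleftrightarrow>
    (\<forall>p\<in>\<Omega>. \<exists>W f lam. open W \<and> p \<in> W \<and> W \<subseteq> \<Omega> \<and> Cinf_on W f \<and>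
       (\<forall>q\<in>W. grad g f q \<noteq> 0 \<and> gval g q (grad g f q) (grad g f q) = 0 \<and>
          (\<forall>i j. hess g f i j q + ricci g i j q + (1/2) * pd i f q * pd j f q
                 = lam q * g q $ i $ j)))"

definition harmonic_weyl :: "'n::finite metric \<Rightarrow> (real^'n) set \<Rightarrow> bool" where
  "harmonic_weyl g \<Omega> \<longleftrightarrow> (\<forall>p\<in>\<Omega>. \<forall>i j k. divW g i j k p = 0)"

definition proj3 :: "real^coord \<Rightarrow> real^coord3" where
  "proj3 p = (\<chi> c. case c of U3 \<Rightarrow> p $ U | X13 \<Rightarrow> p $ X1 | X23 \<Rightarrow> p $ X2)"

definition ppw :: "(real^coord3 \<Rightarrow> real) \<Rightarrow> coord metric" where
  "ppw H p = (\<chi> i j. if i = U \<and> j = U then H (proj3 p)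
      else if (i = U \<and> j = V) \<or> (i = V \<and> j = U) then 1
      else if (i = X1 \<and> j = X1) \<or> (i = X2 \<and> j = X2) then 1 else 0)"

end

theory Submission
  imports Defs "HOL-Analysis.Analysis"
begin

lemma pd_hasD:
  assumes "(G has_derivative G') (at p)"
  shows "pd i G p = G' (axis i 1)"
proof -
  have lin: "linear G'" using assms has_derivative_linear by blast
  have d1: "((\<lambda>t::real. p + t *\<^sub>R axis i 1) has_derivative (\<lambda>t. t *\<^sub>R axis i 1)) (at 0)"
    by (auto intro!: derivative_eq_intros)
  have "((\<lambda>t. G (p + t *\<^sub>R axis i 1)) has_derivative (\<lambda>t. G' (t *\<^sub>R axis i 1))) (at 0)"
    using diff_chain_at[OF d1, of G G'] assms by (simp add: o_def)
  moreover have "(\<lambda>t. G' (t *\<^sub>R axis i 1)) = (*) (G' (axis i 1))"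
    using lin by (auto simp: linear_scale fun_eq_iff)
  ultimately have "((\<lambda>t. G (p + t *\<^sub>R axis i 1)) has_field_derivative G' (axis i 1)) (at 0)"
    by (simp add: has_field_derivative_def)
  then show ?thesis unfolding pd_def by (rule DERIV_imp_deriv)
qed

lemma pd_const[simp]: "pd i (\<lambda>q. c) p = 0"
  unfolding pd_def by simp

definition c3 :: "coord \<Rightarrow> coord3" where
  "c3 i = (case i of U \<Rightarrow> U3 | V \<Rightarrow> U3 | X1 \<Rightarrow> X13 | X2 \<Rightarrow> X23)"

lemma proj3_add: "proj3 (p + q) = proj3 p + proj3 q"
  by (auto simp: proj3_def vec_eq_iff split: coord3.splits)
lemma proj3_scale: "proj3 (t *\<^sub>R p) = t *\<^sub>R proj3 p"
  by (auto simp: proj3_def vec_eq_iff split: coord3.splits)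
lemma proj3_axis: "proj3 (axis i 1) = (if i = V then 0 else axis (c3 i) 1)"
  by (cases i) (auto simp: proj3_def vec_eq_iff axis_def c3_def split: coord3.splits)

lemma pd_lift: "pd i (\<lambda>q. G (proj3 q)) p = (if i = V then 0 else pd (c3 i) G (proj3 p))"
  unfolding pd_def by (simp add: proj3_add proj3_scale proj3_axis)

lemma diff_hasD:
  fixes G :: "real^'n::finite \<Rightarrow> real"
  assumes "G differentiable (at p)"
  shows "(G has_derivative (\<lambda>h. \<Sum>i\<in>UNIV. h $ i * pd i G p)) (at p)"
proof -
  obtain L where L: "(G has_derivative L) (at p)" using assms differentiable_def by blast
  have lin: "linear L" using L has_derivative_linear by blast
  have "L h = (\<Sum>i\<in>UNIV. h $ i * pd i G p)" for h
  proof -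
    have "L h = L (\<Sum>i\<in>UNIV. h $ i *\<^sub>R axis i 1)"
      using basis_expansion[of h] by (simp add: scalar_mult_eq_scaleR)
    also have "\<dots> = (\<Sum>i\<in>UNIV. h $ i * L (axis i 1))"
      using lin by (simp add: linear_sum linear_scale)
    finally show ?thesis using pd_hasD[OF L] by simp
  qed
  then have "L = (\<lambda>h. \<Sum>i\<in>UNIV. h $ i * pd i G p)" by auto
  then show ?thesis using L by simp
qed

lemma sum_axis_delta[simp]: "(\<Sum>i\<in>UNIV. axis c (1::real) $ i * F i) = F c"
  by (simp add: axis_def if_distrib[of "\<lambda>x. x * F _"] cong: if_cong)

lemma pd_cmult:
  assumes "G differentiable (at p)"
  shows "pd i (\<lambda>q. c * G q) p = c * pd i G p"
  by (subst pd_hasD[of _ "\<lambda>h. c * (\<Sum>i\<in>UNIV. h $ i * pd i G p)"])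
     (auto intro!: derivative_eq_intros diff_hasD[OF assms])

definition Gi :: "(real^coord3 \<Rightarrow> real) \<Rightarrow> real^coord \<Rightarrow> real^coord^coord" where
  "Gi H p = (\<chi> k l. if (k = U \<and> l = V) \<or> (k = V \<and> l = U) then 1
     else if k = V \<and> l = V then - H (proj3 p)
     else if k = l \<and> (k = X1 \<or> k = X2) then 1 else 0)"

lemma sum_coord: "(\<Sum>i\<in>UNIV. F i) = F U + F V + F X1 + F X2"
  by (simp add: UNIV_coord add.assoc)

lemma ginv_ppw: "ginv (ppw H) p = Gi H p"
proof -
  have 1: "ppw H p ** Gi H p = mat 1"
    unfolding matrix_matrix_mult_def
    by (simp add: vec_eq_iff sum_coord ppw_def Gi_def mat_def) (metis coord.exhaust)
  have 2: "Gi H p ** ppw H p = mat 1"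
    unfolding matrix_matrix_mult_def
    by (simp add: vec_eq_iff sum_coord ppw_def Gi_def mat_def) (metis coord.exhaust)
  have "\<exists>A'. ppw H p ** A' = mat 1 \<and> A' ** ppw H p = mat 1" using 1 2 by blast
  then have 3: "ppw H p ** matrix_inv (ppw H p) = mat 1 \<and> matrix_inv (ppw H p) ** ppw H p = mat 1"
    unfolding matrix_inv_def by (rule someI_ex)
  have "matrix_inv (ppw H p) = (Gi H p ** ppw H p) ** matrix_inv (ppw H p)"
    using 2 by (simp add: matrix_mul_lid)
  also have "\<dots> = Gi H p" using 3 by (simp add: matrix_mul_assoc[symmetric] matrix_mul_rid)
  finally show ?thesis by (simp add: ginv_def)
qed

lemma ppw_entry: "(\<lambda>q. ppw H q $ i $ j) = (if i = U \<and> j = U then (\<lambda>q. H (proj3 q))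
   else (\<lambda>q. if (i = U \<and> j = V) \<or> (i = V \<and> j = U) \<or> (i = X1 \<and> j = X1) \<or> (i = X2 \<and> j = X2) then 1 else 0))"
  by (auto simp: ppw_def fun_eq_iff)

lemma pd_ppw: "pd l (\<lambda>q. ppw H q $ i $ j) p =
   (if i = U \<and> j = U then (if l = V then 0 else pd (c3 l) H (proj3 p)) else 0)"
  by (simp add: ppw_entry pd_lift)

definition Cf :: "(real^coord3 \<Rightarrow> real) \<Rightarrow> coord \<Rightarrow> coord \<Rightarrow> coord \<Rightarrow> real^coord3 \<Rightarrow> real" where
 "Cf H k i j = (\<lambda>y. if k = V \<and> i = U \<and> j = U then (1/2) * pd U3 H y
    else if k = V \<and> (i = U \<and> j = X1 \<or> i = X1 \<and> j = U) then (1/2) * pd X13 H y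
    else if k = V \<and> (i = U \<and> j = X2 \<or> i = X2 \<and> j = U) then (1/2) * pd X23 H y
    else if k = X1 \<and> i = U \<and> j = U then (-1/2) * pd X13 H y
    else if k = X2 \<and> i = U \<and> j = U then (-1/2) * pd X23 H y else 0)"

lemma chr_ppw: "chr (ppw H) k i j p = Cf H k i j (proj3 p)"
  unfolding chr_def ginv_ppw pd_ppw
  by (cases k; cases i; cases j) (simp_all add: sum_coord Gi_def Cf_def c3_def)

lemma chr_ppw_fun: "chr (ppw H) k i j = (\<lambda>p. Cf H k i j (proj3 p))"
  by (simp add: fun_eq_iff chr_ppw)

lemma Cinf_diff:
  assumes "open S" "Cinf_on S F" "x \<in> S"
  shows "pds is F differentiable (at x)"
  using assms unfolding Cinf_on_def
  by (metis at_within_open differentiable_on_def)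

lemma pd_uminus:
  assumes "G differentiable (at p)"
  shows "pd i (\<lambda>q. - G q) p = - pd i G p"
  using pd_cmult[OF assms, of i "-1"] by simp

lemma pd_divide:
  assumes "G differentiable (at p)"
  shows "pd i (\<lambda>q. G q / c) p = pd i G p / c"
  using pd_cmult[OF assms, of i "1/c"] by simp

lemma pd_neg_div:
  assumes "G differentiable (at p)"
  shows "pd i (\<lambda>q. - (G q / c)) p = - (pd i G p / c)"
  using pd_cmult[OF assms, of i "-1/c"] by simp

definition Rf :: "(real^coord3 \<Rightarrow> real) \<Rightarrow> real^coord3 \<Rightarrow> real" where
  "Rf H y = (-1/2) * pd X13 (pd X13 H) y + (-1/2) * pd X23 (pd X23 H) y"

lemma ricci_ppw:
  assumes "open D" "Cinf_on D H" "proj3 q \<in> D"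
  shows "ricci (ppw H) i j q = (if i = U \<and> j = U then Rf H (proj3 q) else 0)"
proof -
  have d1: "pd X13 H differentiable (at (proj3 q))"
    using Cinf_diff[OF assms, of "[X13]"] by simp
  have d2: "pd X23 H differentiable (at (proj3 q))"
    using Cinf_diff[OF assms, of "[X23]"] by simp
  have d3: "pd U3 H differentiable (at (proj3 q))"
    using Cinf_diff[OF assms, of "[U3]"] by simp
  show ?thesis
    unfolding ricci_def chr_ppw_fun pd_lift
    by (cases i; cases j) (simp_all add: sum_coord Cf_def c3_def pd_cmult pd_neg_div pd_divide d1 d2 d3 Rf_def)
qed

lemma pd_local:
  assumes "open S" "x \<in> S" "\<And>y. y \<in> S \<Longrightarrow> F y = G y"
  shows "pd i F x = pd i G x"
proof -
  let ?T = "(\<lambda>t::real. x + t *\<^sub>R axis i 1) -` S"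
  have "open ?T" using assms(1) by (intro continuous_open_vimage) (auto intro!: continuous_intros)
  moreover have "0 \<in> ?T" using assms(2) by simp
  ultimately have "eventually (\<lambda>t. t \<in> ?T) (nhds 0)" by (rule eventually_nhds_in_open)
  then have "eventually (\<lambda>t. F (x + t *\<^sub>R axis i 1) = G (x + t *\<^sub>R axis i 1)) (nhds 0)"
    by eventually_elim (use assms(3) in auto)
  then show ?thesis unfolding pd_def by (rule deriv_cong_ev) simp
qed

lemma linear_proj3: "linear proj3"
  by (rule linearI) (simp_all add: proj3_add proj3_scale)

lemma cont_proj3: "continuous (at x) proj3"
  using linear_proj3 by (simp add: linear_continuous_at linear_conv_bounded_linear)

lemma open_Omega: "open D \<Longrightarrow> open {p. proj3 p \<in> D}"
  using continuous_open_vimage[OF _ cont_proj3, of D] by (simp add: vimage_def)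

lemma proj3_surj: "\<exists>q. proj3 q = y"
proof
  show "proj3 (\<chi> c. case c of U \<Rightarrow> y $ U3 | V \<Rightarrow> 0 | X1 \<Rightarrow> y $ X13 | X2 \<Rightarrow> y $ X23) = y"
    by (auto simp: proj3_def vec_eq_iff split: coord3.splits)
qed

locale ppsetup =
  fixes H :: "real^coord3 \<Rightarrow> real" and D :: "(real^coord3) set"
  assumes oD: "open D" and sH: "Cinf_on D H"
begin

abbreviation "Om \<equiv> {p. proj3 p \<in> D}"

lemma oOm: "open Om" using open_Omega[OF oD] .

lemma ricci: "q \<in> Om \<Longrightarrow> ricci (ppw H) i j q = (if i = U \<and> j = U then Rf H (proj3 q) else 0)"
  using ricci_ppw[OF oD sH] by simp

lemma scal: "q \<in> Om \<Longrightarrow> scal (ppw H) q = 0"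
  unfolding scal_def ginv_ppw by (simp add: ricci sum_coord Gi_def)

lemma pd_scal: "q \<in> Om \<Longrightarrow> pd i (scal (ppw H)) q = 0"
  using pd_local[OF oOm, of q "scal (ppw H)" "\<lambda>_. 0" i] scal by simp

lemma pd_ricci: "q \<in> Om \<Longrightarrow> pd k (ricci (ppw H) i j) q =
   (if i = U \<and> j = U then (if k = V then 0 else pd (c3 k) (Rf H) (proj3 q)) else 0)"
  using pd_local[OF oOm, of q "ricci (ppw H) i j" "\<lambda>q. if i = U \<and> j = U then Rf H (proj3 q) else 0" k]
  by (cases "i = U \<and> j = U") (auto simp: ricci pd_lift)

definition "dR q i = (if i = V then 0 else pd (c3 i) (Rf H) (proj3 q))"

lemma divW: "q \<in> Om \<Longrightarrow> divW (ppw H) i j k q =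
   -(1/2) * ((if j = U \<and> k = U then dR q i else 0) - (if i = U \<and> k = U then dR q j else 0))"
  unfolding divW_def cov_ricci_def
  by (simp add: pd_ricci pd_scal ricci chr_ppw sum_coord Cf_def dR_def)

lemma harmonic_iff: "harmonic_weyl (ppw H) Om \<longleftrightarrow> (\<forall>y\<in>D. pd X13 (Rf H) y = 0 \<and> pd X23 (Rf H) y = 0)"
proof
  assume h: "harmonic_weyl (ppw H) Om"
  show "\<forall>y\<in>D. pd X13 (Rf H) y = 0 \<and> pd X23 (Rf H) y = 0"
  proof
    fix y assume "y \<in> D"
    obtain q where q: "proj3 q = y" using proj3_surj by blast
    then have qO: "q \<in> Om" using \<open>y \<in> D\<close> by simp
    have "divW (ppw H) X1 U U q = 0" "divW (ppw H) X2 U U q = 0"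
      using h qO unfolding harmonic_weyl_def by auto
    then show "pd X13 (Rf H) y = 0 \<and> pd X23 (Rf H) y = 0"
      using qO q by (simp add: divW dR_def c3_def)
  qed
next
  assume h: "\<forall>y\<in>D. pd X13 (Rf H) y = 0 \<and> pd X23 (Rf H) y = 0"
  show "harmonic_weyl (ppw H) Om"
    unfolding harmonic_weyl_def
  proof (intro ballI allI)
    fix q i j k assume qO: "q \<in> Om"
    have z: "dR q l = 0 \<or> l = U" for l using h qO by (cases l) (auto simp: dR_def c3_def)
    show "divW (ppw H) i j k q = 0"
      using z[of i] z[of j] by (auto simp: divW[OF qO])
  qed
qed

end

lemma axis_scale_nth: "(t *\<^sub>R axis i (1::real)) $ k = (if k = i then t else 0)"
  by (simp add: axis_def)

lemma sum_single_nz: "(\<And>k. k \<noteq> i \<Longrightarrow> f k = 0) \<Longrightarrow> (\<Sum>k\<in>(UNIV::'n::finite set). f k) = (f i::real)"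
  by (subst sum.remove[of UNIV i]) (auto intro: sum.neutral)

lemma sum_if_mult: "(\<Sum>k\<in>UNIV. (if k = (i::'n::finite) then t else 0) * F k) = t * (F i::real)"
  by (subst sum_single_nz[where i=i]) auto

lemma sum_axis_mult: "(\<Sum>k\<in>UNIV. t * axis (i::'n::finite) 1 $ k * F k) = t * (F i::real)"
  by (subst sum_single_nz[where i=i]) (auto simp: axis_def)

lemma line_deriv:
  fixes g :: "real^'n::finite \<Rightarrow> real"
  assumes "g differentiable (at (x + s *\<^sub>R axis i 1))"
  shows "((\<lambda>t. g (x + t *\<^sub>R axis i 1)) has_real_derivative pd i g (x + s *\<^sub>R axis i 1)) (at s)"
proof -
  have d1: "((\<lambda>t::real. x + t *\<^sub>R axis i 1) has_derivative (\<lambda>t. t *\<^sub>R axis i 1)) (at s)"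
    by (auto intro!: derivative_eq_intros)
  have "((\<lambda>t. g (x + t *\<^sub>R axis i 1)) has_derivative
      (\<lambda>t. \<Sum>k\<in>UNIV. (t *\<^sub>R axis i 1) $ k * pd k g (x + s *\<^sub>R axis i 1))) (at s)"
    using diff_chain_at[OF d1 diff_hasD[OF assms]] by (simp add: o_def)
  moreover have "(\<lambda>t. \<Sum>k\<in>UNIV. (t *\<^sub>R axis i 1) $ k * pd k g (x + s *\<^sub>R axis i 1))
     = (*) (pd i g (x + s *\<^sub>R axis i 1))"
    by (auto simp: fun_eq_iff sum_axis_mult)
  ultimately show ?thesis by (simp add: has_field_derivative_def)
qed

lemma schwarz_half:
  fixes g :: "real^'n::finite \<Rightarrow> real"
  assumes oS: "open S" and pS: "p \<in> S" and dg: "\<And>x. x \<in> S \<Longrightarrow> g differentiable (at x)"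
    and di: "pd i g differentiable (at p)" and e: "e > 0"
  shows "\<exists>d>0. \<forall>h. 0 < h \<and> h < d \<longrightarrow>
    \<bar>(g (p + h *\<^sub>R axis j 1 + h *\<^sub>R axis i 1) - g (p + h *\<^sub>R axis i 1) - g (p + h *\<^sub>R axis j 1) + g p)
      - h^2 * pd j (pd i g) p\<bar> \<le> e * h^2"
proof -
  define L where "L = (\<lambda>v. \<Sum>k\<in>UNIV. v $ k * pd k (pd i g) p)"
  have hL: "(pd i g has_derivative L) (at p)" unfolding L_def by (rule diff_hasD[OF di])
  have linL: "linear L" using hL has_derivative_linear by blast
  obtain d1 where d1: "d1 > 0" "\<And>y. norm (y - p) < d1 \<Longrightarrow>
      norm (pd i g y - pd i g p - L (y - p)) \<le> (e/3) * norm (y - p)"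
    using hL e unfolding has_derivative_at_alt by (metis divide_pos_pos zero_less_numeral)
  obtain r where r: "r > 0" "ball p r \<subseteq> S" using oS pS open_contains_ball by blast
  define d where "d = min (d1/2) (r/2)"
  have "d > 0" using d1 r by (simp add: d_def)
  moreover have "\<bar>(g (p + h *\<^sub>R axis j 1 + h *\<^sub>R axis i 1) - g (p + h *\<^sub>R axis i 1) - g (p + h *\<^sub>R axis j 1) + g p)
      - h^2 * pd j (pd i g) p\<bar> \<le> e * h^2" if h: "0 < h" "h < d" for h
  proof -
    have inS: "p + a *\<^sub>R axis j 1 + s *\<^sub>R axis i 1 \<in> S" if "0 \<le> a" "a \<le> h" "0 \<le> s" "s \<le> h" for a s
    proof -
      have "norm (a *\<^sub>R axis j 1 + s *\<^sub>R axis i 1 :: real^'n) \<le> a + s"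
        using norm_triangle_ineq[of "a *\<^sub>R axis j (1::real)" "s *\<^sub>R axis i 1"] that by simp
      then have "norm ((p + a *\<^sub>R axis j 1 + s *\<^sub>R axis i 1) - p) < r"
        using that h by (simp add: d_def add.assoc)
      then have "p + a *\<^sub>R axis j 1 + s *\<^sub>R axis i 1 \<in> ball p r"
        by (simp add: dist_norm norm_minus_commute add.commute)
      then show ?thesis using r by auto
    qed
    define \<phi> where "\<phi> = (\<lambda>s. g ((p + h *\<^sub>R axis j 1) + s *\<^sub>R axis i 1) - g (p + s *\<^sub>R axis i 1))"
    have der: "DERIV \<phi> s :> pd i g ((p + h *\<^sub>R axis j 1) + s *\<^sub>R axis i 1) - pd i g (p + s *\<^sub>R axis i 1)"
      if "0 \<le> s" "s \<le> h" for s
      unfolding \<phi>_def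
      apply (intro DERIV_diff line_deriv dg)
      using inS[of h s] inS[of 0 s] that h by auto
    obtain \<xi> where xi: "0 < \<xi>" "\<xi> < h"
      "\<phi> h - \<phi> 0 = (h - 0) * (pd i g ((p + h *\<^sub>R axis j 1) + \<xi> *\<^sub>R axis i 1) - pd i g (p + \<xi> *\<^sub>R axis i 1))"
      using MVT2[OF h(1) der] by auto
    define y1 where "y1 = (p + h *\<^sub>R axis j 1) + \<xi> *\<^sub>R axis i 1"
    define y2 where "y2 = p + \<xi> *\<^sub>R axis i 1"
    have n1: "norm (y1 - p) \<le> 2 * h"
    proof -
      have "norm (y1 - p) \<le> h + \<xi>"
        using norm_triangle_ineq[of "h *\<^sub>R axis j (1::real)" "\<xi> *\<^sub>R axis i 1"] xi h
        by (simp add: y1_def)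
      then show ?thesis using xi by simp
    qed
    have n2: "norm (y2 - p) \<le> h" using xi by (simp add: y2_def)
    have b1: "\<bar>pd i g y1 - pd i g p - L (y1 - p)\<bar> \<le> (e/3) * norm (y1 - p)"
      using d1(2)[of y1] n1 h by (simp add: d_def)
    have b2: "\<bar>pd i g y2 - pd i g p - L (y2 - p)\<bar> \<le> (e/3) * norm (y2 - p)"
      using d1(2)[of y2] n2 h by (simp add: d_def)
    have "L (y1 - p) - L (y2 - p) = L (y1 - y2)" using linL by (simp add: linear_diff[symmetric])
    also have "y1 - y2 = h *\<^sub>R axis j 1" by (simp add: y1_def y2_def)
    also have "L (h *\<^sub>R axis j 1) = h * pd j (pd i g) p"
      by (simp add: L_def sum_axis_mult)
    finally have Ld: "L (y1 - p) - L (y2 - p) = h * pd j (pd i g) p" .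
    have "\<bar>(pd i g y1 - pd i g y2) - h * pd j (pd i g) p\<bar> \<le> (e/3) * norm (y1 - p) + (e/3) * norm (y2 - p)"
      using b1 b2 Ld by linarith
    also have "\<dots> \<le> (e/3) * (2*h) + (e/3) * h"
      using n1 n2 e by (intro add_mono mult_left_mono) auto
    finally have "\<bar>(pd i g y1 - pd i g y2) - h * pd j (pd i g) p\<bar> \<le> e * h" by simp
    then have A: "h * \<bar>(pd i g y1 - pd i g y2) - h * pd j (pd i g) p\<bar> \<le> h * (e * h)"
      using h by (simp add: mult_left_mono)
    have "\<phi> h - \<phi> 0 = g (p + h *\<^sub>R axis j 1 + h *\<^sub>R axis i 1) - g (p + h *\<^sub>R axis i 1) - g (p + h *\<^sub>R axis j 1) + g p"
      by (simp add: \<phi>_def)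
    then have De: "g (p + h *\<^sub>R axis j 1 + h *\<^sub>R axis i 1) - g (p + h *\<^sub>R axis i 1) - g (p + h *\<^sub>R axis j 1) + g p
       = h * (pd i g y1 - pd i g y2)" using xi(3) by (simp add: y1_def y2_def)
    have "\<bar>h * (pd i g y1 - pd i g y2) - h^2 * pd j (pd i g) p\<bar> = h * \<bar>(pd i g y1 - pd i g y2) - h * pd j (pd i g) p\<bar>"
    proof -
      have "h * (pd i g y1 - pd i g y2) - h^2 * pd j (pd i g) p = h * ((pd i g y1 - pd i g y2) - h * pd j (pd i g) p)"
        by (simp add: power2_eq_square algebra_simps)
      then show ?thesis using h by (simp only: abs_mult)
    qed
    then show ?thesis using A De by (simp add: power2_eq_square mult.commute mult.left_commute)
  qed
  ultimately show ?thesis by blast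
qed

lemma schwarz:
  fixes g :: "real^'n::finite \<Rightarrow> real"
  assumes oS: "open S" and pS: "p \<in> S" and dg: "\<And>x. x \<in> S \<Longrightarrow> g differentiable (at x)"
    and di: "pd i g differentiable (at p)" and dj: "pd j g differentiable (at p)"
  shows "pd j (pd i g) p = pd i (pd j g) p"
proof (rule ccontr)
  let ?A = "pd j (pd i g) p" and ?B = "pd i (pd j g) p"
  assume ne: "?A \<noteq> ?B"
  define e where "e = \<bar>?A - ?B\<bar> / 4"
  have e: "e > 0" using ne by (simp add: e_def)
  obtain d1 where d1: "d1 > 0" "\<forall>h. 0 < h \<and> h < d1 \<longrightarrow>
    \<bar>(g (p + h *\<^sub>R axis j 1 + h *\<^sub>R axis i 1) - g (p + h *\<^sub>R axis i 1) - g (p + h *\<^sub>R axis j 1) + g p)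
      - h^2 * ?A\<bar> \<le> e * h^2"
    using schwarz_half[OF oS pS dg di e, of j] by blast
  obtain d2 where d2: "d2 > 0" "\<forall>h. 0 < h \<and> h < d2 \<longrightarrow>
    \<bar>(g (p + h *\<^sub>R axis i 1 + h *\<^sub>R axis j 1) - g (p + h *\<^sub>R axis j 1) - g (p + h *\<^sub>R axis i 1) + g p)
      - h^2 * ?B\<bar> \<le> e * h^2"
    using schwarz_half[OF oS pS dg dj e, of i] by blast
  define h where "h = min d1 d2 / 2"
  have h: "0 < h" "h < d1" "h < d2" using d1 d2 by (auto simp: h_def)
  have sw: "p + h *\<^sub>R axis i 1 + h *\<^sub>R axis j 1 = p + h *\<^sub>R axis j 1 + h *\<^sub>R axis i 1"
    by (simp add: algebra_simps)
  have "\<bar>h^2 * ?A - h^2 * ?B\<bar> \<le> 2 * e * h^2"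
    using d1(2)[rule_format, of h] d2(2)[rule_format, of h] h sw by (simp add: abs_le_iff)
  then have "h^2 * \<bar>?A - ?B\<bar> \<le> h^2 * (2 * e)"
    by (simp add: right_diff_distrib[symmetric] abs_mult mult.commute mult.left_commute)
  then have "\<bar>?A - ?B\<bar> \<le> 2 * e" using h by simp
  then show False using e by (simp add: e_def)
qed

lemma diff_lift: "G differentiable (at (proj3 y)) \<Longrightarrow> (\<lambda>y. G (proj3 y)) differentiable (at y)"
  using differentiable_chain_at[of proj3 y G] linear_proj3
  by (simp add: linear_imp_differentiable o_def)

locale qe = ppsetup +
  fixes W f lam
  assumes oW: "open W" and WO: "W \<subseteq> Om" and sf: "Cinf_on W f"
    and gr: "\<And>q. q \<in> W \<Longrightarrow> grad (ppw H) f q \<noteq> 0"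
    and nl: "\<And>q. q \<in> W \<Longrightarrow> gval (ppw H) q (grad (ppw H) f q) (grad (ppw H) f q) = 0"
    and eq: "\<And>q i j. q \<in> W \<Longrightarrow> hess (ppw H) f i j q + ricci (ppw H) i j q + (1/2) * pd i f q * pd j f q
                 = lam q * ppw H q $ i $ j"
begin

lemma dH: "y \<in> Om \<Longrightarrow> pds is H differentiable (at (proj3 y))"
  using Cinf_diff[OF oD sH] by simp

lemma dRf: "y \<in> Om \<Longrightarrow> Rf H differentiable (at (proj3 y))"
  unfolding Rf_def using dH[of y "[X13,X13]"] dH[of y "[X23,X23]"] by simp

lemma df: "y \<in> W \<Longrightarrow> pds is f differentiable (at y)"
  using Cinf_diff[OF oW sf] by simp

lemma df0: "y \<in> W \<Longrightarrow> f differentiable (at y)" using df[of y "[]"] by simp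
lemma df1: "y \<in> W \<Longrightarrow> pd k f differentiable (at y)" using df[of y "[k]"] by simp
lemma df2: "y \<in> W \<Longrightarrow> pd i (pd k f) differentiable (at y)" using df[of y "[i,k]"] by simp

lemma hf: "y \<in> W \<Longrightarrow> (pd k f has_derivative (\<lambda>h. \<Sum>i\<in>UNIV. h $ i * pd i (pd k f) y)) (at y)"
  by (rule diff_hasD[OF df1])

lemma hL: "G differentiable (at (proj3 y)) \<Longrightarrow>
   ((\<lambda>y. G (proj3 y)) has_derivative (\<lambda>h. \<Sum>i\<in>UNIV. h $ i * pd i (\<lambda>y. G (proj3 y)) y)) (at y)"
  by (rule diff_hasD[OF diff_lift])

lemma grad_eq: "grad (ppw H) f y = (\<chi> k. if k = U then pd V f y else if k = V then pd U f y - H (proj3 y) * pd V f y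
   else if k = X1 then pd X1 f y else pd X2 f y)"
  unfolding grad_def ginv_ppw
  by (auto simp: vec_eq_iff matrix_vector_mult_def sum_coord Gi_def) (metis coord.exhaust)+

definition "Nf y = 2 * pd U f y * pd V f y - H (proj3 y) * (pd V f y)^2 + (pd X1 f y)^2 + (pd X2 f y)^2"

lemma gval_eq: "gval (ppw H) y (grad (ppw H) f y) (grad (ppw H) f y) = Nf y"
  unfolding gval_def grad_eq Nf_def by (simp add: sum_coord ppw_def power2_eq_square algebra_simps)

lemma Nf0: "y \<in> W \<Longrightarrow> Nf y = 0" using nl gval_eq by simp

lemma grad0: "y \<in> W \<Longrightarrow> \<not> (pd U f y = 0 \<and> pd V f y = 0 \<and> pd X1 f y = 0 \<and> pd X2 f y = 0)"
  using gr[of y] by (auto simp: grad_eq vec_eq_iff split: if_splits)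

lemma fdd: "y \<in> W \<Longrightarrow> pd i (pd j f) y = lam y * ppw H y $ i $ j - ricci (ppw H) i j y
   - (1/2) * pd i f y * pd j f y + (\<Sum>k\<in>UNIV. Cf H k i j (proj3 y) * pd k f y)"
  using eq[of y i j] unfolding hess_def chr_ppw by linarith

lemma fdd_expl:
  assumes y: "y \<in> W"
  shows "pd V (pd V f) y = -(1/2) * (pd V f y)^2"
    and "pd V (pd U f) y = lam y - (1/2) * pd V f y * pd U f y"
    and "pd U (pd V f) y = lam y - (1/2) * pd U f y * pd V f y"
    and "pd V (pd X1 f) y = -(1/2) * pd V f y * pd X1 f y"
    and "pd X1 (pd V f) y = -(1/2) * pd X1 f y * pd V f y"
    and "pd V (pd X2 f) y = -(1/2) * pd V f y * pd X2 f y"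
    and "pd X2 (pd V f) y = -(1/2) * pd X2 f y * pd V f y"
    and "pd X1 (pd X1 f) y = lam y - (1/2) * (pd X1 f y)^2"
    and "pd X2 (pd X2 f) y = lam y - (1/2) * (pd X2 f y)^2"
    and "pd X1 (pd X2 f) y = -(1/2) * pd X1 f y * pd X2 f y"
    and "pd X2 (pd X1 f) y = -(1/2) * pd X2 f y * pd X1 f y"
    and "pd U (pd X1 f) y = (1/2) * pd X13 H (proj3 y) * pd V f y - (1/2) * pd U f y * pd X1 f y"
    and "pd X1 (pd U f) y = (1/2) * pd X13 H (proj3 y) * pd V f y - (1/2) * pd X1 f y * pd U f y"
    and "pd U (pd X2 f) y = (1/2) * pd X23 H (proj3 y) * pd V f y - (1/2) * pd U f y * pd X2 f y"
    and "pd X2 (pd U f) y = (1/2) * pd X23 H (proj3 y) * pd V f y - (1/2) * pd X2 f y * pd U f y"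
    and "pd U (pd U f) y = lam y * H (proj3 y) + (1/2) * pd U3 H (proj3 y) * pd V f y
          - (1/2) * pd X13 H (proj3 y) * pd X1 f y - (1/2) * pd X23 H (proj3 y) * pd X2 f y
          - Rf H (proj3 y) - (1/2) * (pd U f y)^2"
proof -
  have yO: "y \<in> Om" using y WO by auto
  note F = fdd[OF y] ricci[OF yO]
  show "pd V (pd V f) y = -(1/2) * (pd V f y)^2"
    using F[of V V] by (simp add: sum_coord Cf_def ppw_def power2_eq_square)
  show "pd V (pd U f) y = lam y - (1/2) * pd V f y * pd U f y"
    using F[of V U] by (simp add: sum_coord Cf_def ppw_def)
  show "pd U (pd V f) y = lam y - (1/2) * pd U f y * pd V f y"
    using F[of U V] by (simp add: sum_coord Cf_def ppw_def)
  show "pd V (pd X1 f) y = -(1/2) * pd V f y * pd X1 f y"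
    using F[of V X1] by (simp add: sum_coord Cf_def ppw_def)
  show "pd X1 (pd V f) y = -(1/2) * pd X1 f y * pd V f y"
    using F[of X1 V] by (simp add: sum_coord Cf_def ppw_def)
  show "pd V (pd X2 f) y = -(1/2) * pd V f y * pd X2 f y"
    using F[of V X2] by (simp add: sum_coord Cf_def ppw_def)
  show "pd X2 (pd V f) y = -(1/2) * pd X2 f y * pd V f y"
    using F[of X2 V] by (simp add: sum_coord Cf_def ppw_def)
  show "pd X1 (pd X1 f) y = lam y - (1/2) * (pd X1 f y)^2"
    using F[of X1 X1] by (simp add: sum_coord Cf_def ppw_def power2_eq_square)
  show "pd X2 (pd X2 f) y = lam y - (1/2) * (pd X2 f y)^2"
    using F[of X2 X2] by (simp add: sum_coord Cf_def ppw_def power2_eq_square)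
  show "pd X1 (pd X2 f) y = -(1/2) * pd X1 f y * pd X2 f y"
    using F[of X1 X2] by (simp add: sum_coord Cf_def ppw_def)
  show "pd X2 (pd X1 f) y = -(1/2) * pd X2 f y * pd X1 f y"
    using F[of X2 X1] by (simp add: sum_coord Cf_def ppw_def)
  show "pd U (pd X1 f) y = (1/2) * pd X13 H (proj3 y) * pd V f y - (1/2) * pd U f y * pd X1 f y"
    using F[of U X1] by (simp add: sum_coord Cf_def ppw_def)
  show "pd X1 (pd U f) y = (1/2) * pd X13 H (proj3 y) * pd V f y - (1/2) * pd X1 f y * pd U f y"
    using F[of X1 U] by (simp add: sum_coord Cf_def ppw_def)
  show "pd U (pd X2 f) y = (1/2) * pd X23 H (proj3 y) * pd V f y - (1/2) * pd U f y * pd X2 f y"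
    using F[of U X2] by (simp add: sum_coord Cf_def ppw_def)
  show "pd X2 (pd U f) y = (1/2) * pd X23 H (proj3 y) * pd V f y - (1/2) * pd X2 f y * pd U f y"
    using F[of X2 U] by (simp add: sum_coord Cf_def ppw_def)
  show "pd U (pd U f) y = lam y * H (proj3 y) + (1/2) * pd U3 H (proj3 y) * pd V f y
          - (1/2) * pd X13 H (proj3 y) * pd X1 f y - (1/2) * pd X23 H (proj3 y) * pd X2 f y
          - Rf H (proj3 y) - (1/2) * (pd U f y)^2"
    using F[of U U] by (simp add: sum_coord Cf_def ppw_def power2_eq_square algebra_simps)
qed

lemma pdN:
  assumes y: "y \<in> W"
  shows "pd c Nf y = 2 * pd c (pd U f) y * pd V f y + 2 * pd U f y * pd c (pd V f) y
     - pd c (\<lambda>y. H (proj3 y)) y * (pd V f y)^2 - H (proj3 y) * (2 * pd V f y * pd c (pd V f) y)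
     + 2 * pd X1 f y * pd c (pd X1 f) y + 2 * pd X2 f y * pd c (pd X2 f) y"
proof -
  have yO: "y \<in> Om" using y WO by auto
  have hH: "((\<lambda>y. H (proj3 y)) has_derivative (\<lambda>h. \<Sum>i\<in>UNIV. h $ i * pd i (\<lambda>y. H (proj3 y)) y)) (at y)"
    using hL[OF dH[OF yO, of "[]"]] by simp
  show ?thesis
    unfolding Nf_def[abs_def]
    apply (rule trans[OF pd_hasD])
     apply (rule derivative_eq_intros hf[OF y] hH refl)+
    apply (simp add: power2_eq_square algebra_simps)
    done
qed

lemma pdN0: "y \<in> W \<Longrightarrow> pd c Nf y = 0"
  using pd_local[OF oW, of y Nf "\<lambda>_. 0" c] Nf0 by simp

lemma lam_rel:
  assumes y: "y \<in> W"
  shows "lam y * pd V f y = 0" "lam y * pd X1 f y = 0" "lam y * pd X2 f y = 0"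
    "lam y * pd U f y - Rf H (proj3 y) * pd V f y = 0"
proof -
  have N: "Nf y = 0" using Nf0[OF y] .
  have "pd V Nf y = 2 * lam y * pd V f y - pd V f y * Nf y"
    by (simp add: pdN[OF y] fdd_expl[OF y] pd_lift Nf_def power2_eq_square algebra_simps)
  then show "lam y * pd V f y = 0" using N pdN0[OF y, of V] by simp
  have "pd X1 Nf y = 2 * lam y * pd X1 f y - pd X1 f y * Nf y"
    by (simp add: pdN[OF y] fdd_expl[OF y] pd_lift c3_def Nf_def power2_eq_square algebra_simps)
  then show "lam y * pd X1 f y = 0" using N pdN0[OF y, of X1] by simp
  have "pd X2 Nf y = 2 * lam y * pd X2 f y - pd X2 f y * Nf y"
    by (simp add: pdN[OF y] fdd_expl[OF y] pd_lift c3_def Nf_def power2_eq_square algebra_simps)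
  then show "lam y * pd X2 f y = 0" using N pdN0[OF y, of X2] by simp
  have "pd U Nf y = 2 * lam y * pd U f y - 2 * Rf H (proj3 y) * pd V f y - pd U f y * Nf y"
    by (simp add: pdN[OF y] fdd_expl[OF y] pd_lift c3_def Nf_def power2_eq_square algebra_simps)
  then show "lam y * pd U f y - Rf H (proj3 y) * pd V f y = 0" using N pdN0[OF y, of U] by simp
qed

lemma lam0: "y \<in> W \<Longrightarrow> lam y = 0"
  using lam_rel[of y] grad0[of y] by auto

lemma RV0: "y \<in> W \<Longrightarrow> Rf H (proj3 y) * pd V f y = 0"
  using lam_rel[of y] lam0[of y] by simp

lemma stepB1:
  assumes q: "q \<in> W"
  shows "pd X13 (Rf H) (proj3 q) = 0"
proof -
  have qO: "q \<in> Om" using q WO by auto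
  have dU: "pd U3 H differentiable (at (proj3 q))" using dH[OF qO, of "[U3]"] by simp
  have d1: "pd X13 H differentiable (at (proj3 q))" using dH[OF qO, of "[X13]"] by simp
  have d2: "pd X23 H differentiable (at (proj3 q))" using dH[OF qO, of "[X23]"] by simp
  note dR = dRf[OF qO]
  note E = fdd_expl[OF q]
  have l0: "lam q = 0" using lam0[OF q] .
  show ?thesis
  proof (cases "pd V f q = 0")
    case False
    define P where "P y = Rf H (proj3 y) * pd V f y" for y
    have "pd X1 P q = 0" using pd_local[OF oW q, of P "\<lambda>_. 0" X1] RV0 by (simp add: P_def)
    moreover have "pd X1 P q = pd X13 (Rf H) (proj3 q) * pd V f q + Rf H (proj3 q) * pd X1 (pd V f) q"
      unfolding P_def[abs_def]
      apply (rule trans[OF pd_hasD])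
       apply (rule derivative_eq_intros hf[OF q] hL[OF dR] refl)+
      apply (simp add: pd_lift c3_def)
      done
    moreover have "Rf H (proj3 q) = 0" using RV0[OF q] False by simp
    ultimately show ?thesis using False by simp
  next
    case True
    have "(pd X1 f q)^2 + (pd X2 f q)^2 = 0" using Nf0[OF q] True by (simp add: Nf_def)
    then have f12: "pd X1 f q = 0" "pd X2 f q = 0" by (simp_all add: sum_power2_eq_zero_iff)
    have sw: "pd X1 (pd U (pd U f)) q = pd U (pd X1 (pd U f)) q"
      by (rule schwarz[OF oW q]) (use df1 df2[OF q] in auto)
    define Quu where "Quu y = (1/2) * pd U3 H (proj3 y) * pd V f y
          - (1/2) * pd X13 H (proj3 y) * pd X1 f y - (1/2) * pd X23 H (proj3 y) * pd X2 f y
          - Rf H (proj3 y) - (1/2) * (pd U f y)^2" for y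
    define Q1u where "Q1u y = (1/2) * pd X13 H (proj3 y) * pd V f y - (1/2) * pd X1 f y * pd U f y" for y
    have "pd X1 (pd U (pd U f)) q = pd X1 Quu q"
      using pd_local[OF oW q, of "pd U (pd U f)" Quu X1] fdd_expl lam0 by (simp add: Quu_def)
    also have "\<dots> = (1/2) * pd X13 (pd U3 H) (proj3 q) * pd V f q + (1/2) * pd U3 H (proj3 q) * pd X1 (pd V f) q
        - (1/2) * pd X13 (pd X13 H) (proj3 q) * pd X1 f q - (1/2) * pd X13 H (proj3 q) * pd X1 (pd X1 f) q
        - (1/2) * pd X13 (pd X23 H) (proj3 q) * pd X2 f q - (1/2) * pd X23 H (proj3 q) * pd X1 (pd X2 f) q
        - pd X13 (Rf H) (proj3 q) - pd U f q * pd X1 (pd U f) q"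
      unfolding Quu_def[abs_def]
      apply (rule trans[OF pd_hasD])
       apply (rule derivative_eq_intros hf[OF q] hL[OF dR] hL[OF dU] hL[OF d1] hL[OF d2] refl)+
      apply (simp add: pd_lift c3_def power2_eq_square algebra_simps)
      done
    also have "\<dots> = - pd X13 (Rf H) (proj3 q)"
      using True f12 by (simp add: E l0)
    finally have A: "pd X1 (pd U (pd U f)) q = - pd X13 (Rf H) (proj3 q)" .
    have "pd U (pd X1 (pd U f)) q = pd U Q1u q"
      using pd_local[OF oW q, of "pd X1 (pd U f)" Q1u U] fdd_expl by (simp add: Q1u_def)
    also have "\<dots> = (1/2) * pd U3 (pd X13 H) (proj3 q) * pd V f q + (1/2) * pd X13 H (proj3 q) * pd U (pd V f) q
        - (1/2) * pd U (pd X1 f) q * pd U f q - (1/2) * pd X1 f q * pd U (pd U f) q"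
      unfolding Q1u_def[abs_def]
      apply (rule trans[OF pd_hasD])
       apply (rule derivative_eq_intros hf[OF q] hL[OF d1] refl)+
      apply (simp add: pd_lift c3_def algebra_simps)
      done
    also have "\<dots> = 0"
      using True f12 by (simp add: E l0)
    finally show ?thesis using A sw by simp
  qed
qed

lemma stepB2:
  assumes q: "q \<in> W"
  shows "pd X23 (Rf H) (proj3 q) = 0"
proof -
  have qO: "q \<in> Om" using q WO by auto
  have dU: "pd U3 H differentiable (at (proj3 q))" using dH[OF qO, of "[U3]"] by simp
  have d2: "pd X23 H differentiable (at (proj3 q))" using dH[OF qO, of "[X23]"] by simp
  have d1: "pd X13 H differentiable (at (proj3 q))" using dH[OF qO, of "[X13]"] by simp
  note dR = dRf[OF qO]
  note E = fdd_expl[OF q]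
  have l0: "lam q = 0" using lam0[OF q] .
  show ?thesis
  proof (cases "pd V f q = 0")
    case False
    define P where "P y = Rf H (proj3 y) * pd V f y" for y
    have "pd X2 P q = 0" using pd_local[OF oW q, of P "\<lambda>_. 0" X2] RV0 by (simp add: P_def)
    moreover have "pd X2 P q = pd X23 (Rf H) (proj3 q) * pd V f q + Rf H (proj3 q) * pd X2 (pd V f) q"
      unfolding P_def[abs_def]
      apply (rule trans[OF pd_hasD])
       apply (rule derivative_eq_intros hf[OF q] hL[OF dR] refl)+
      apply (simp add: pd_lift c3_def)
      done
    moreover have "Rf H (proj3 q) = 0" using RV0[OF q] False by simp
    ultimately show ?thesis using False by simp
  next
    case True
    have "(pd X2 f q)^2 + (pd X1 f q)^2 = 0" using Nf0[OF q] True by (simp add: Nf_def)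
    then have f12: "pd X2 f q = 0" "pd X1 f q = 0" by (simp_all add: sum_power2_eq_zero_iff)
    have sw: "pd X2 (pd U (pd U f)) q = pd U (pd X2 (pd U f)) q"
      by (rule schwarz[OF oW q]) (use df1 df2[OF q] in auto)
    define Quu where "Quu y = (1/2) * pd U3 H (proj3 y) * pd V f y
          - (1/2) * pd X23 H (proj3 y) * pd X2 f y - (1/2) * pd X13 H (proj3 y) * pd X1 f y
          - Rf H (proj3 y) - (1/2) * (pd U f y)^2" for y
    define Q1u where "Q1u y = (1/2) * pd X23 H (proj3 y) * pd V f y - (1/2) * pd X2 f y * pd U f y" for y
    have "pd X2 (pd U (pd U f)) q = pd X2 Quu q"
      using pd_local[OF oW q, of "pd U (pd U f)" Quu X2] fdd_expl lam0 by (simp add: Quu_def)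
    also have "\<dots> = (1/2) * pd X23 (pd U3 H) (proj3 q) * pd V f q + (1/2) * pd U3 H (proj3 q) * pd X2 (pd V f) q
        - (1/2) * pd X23 (pd X23 H) (proj3 q) * pd X2 f q - (1/2) * pd X23 H (proj3 q) * pd X2 (pd X2 f) q
        - (1/2) * pd X23 (pd X13 H) (proj3 q) * pd X1 f q - (1/2) * pd X13 H (proj3 q) * pd X2 (pd X1 f) q
        - pd X23 (Rf H) (proj3 q) - pd U f q * pd X2 (pd U f) q"
      unfolding Quu_def[abs_def]
      apply (rule trans[OF pd_hasD])
       apply (rule derivative_eq_intros hf[OF q] hL[OF dR] hL[OF dU] hL[OF d2] hL[OF d1] refl)+
      apply (simp add: pd_lift c3_def power2_eq_square algebra_simps)
      done
    also have "\<dots> = - pd X23 (Rf H) (proj3 q)"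
      using True f12 by (simp add: E l0)
    finally have A: "pd X2 (pd U (pd U f)) q = - pd X23 (Rf H) (proj3 q)" .
    have "pd U (pd X2 (pd U f)) q = pd U Q1u q"
      using pd_local[OF oW q, of "pd X2 (pd U f)" Q1u U] fdd_expl by (simp add: Q1u_def)
    also have "\<dots> = (1/2) * pd U3 (pd X23 H) (proj3 q) * pd V f q + (1/2) * pd X23 H (proj3 q) * pd U (pd V f) q
        - (1/2) * pd U (pd X2 f) q * pd U f q - (1/2) * pd X2 f q * pd U (pd U f) q"
      unfolding Q1u_def[abs_def]
      apply (rule trans[OF pd_hasD])
       apply (rule derivative_eq_intros hf[OF q] hL[OF d2] refl)+
      apply (simp add: pd_lift c3_def algebra_simps)
      done
    also have "\<dots> = 0"
      using True f12 by (simp add: E l0)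
    finally show ?thesis using A sw by simp
  qed
qed

end

definition clp :: "real \<Rightarrow> real \<Rightarrow> real \<Rightarrow> real" where "clp a c t = max a (min c t)"

lemma clp_in: "a \<le> c \<Longrightarrow> clp a c t \<in> {a..c}" by (auto simp: clp_def)
lemma clp_id: "t \<in> {a..c} \<Longrightarrow> clp a c t = t" by (auto simp: clp_def)
lemma cont_clp: "continuous_on S (clp a c)" unfolding clp_def by (intro continuous_intros)

locale ode =
  fixes a c B :: real and b :: "real \<Rightarrow> real"
  assumes ac: "a < c" and len: "c - a \<le> 1" and B0: "0 \<le> B" and bB: "\<And>t. t \<in> {a..c} \<Longrightarrow> \<bar>b t\<bar> \<le> B"
    and small: "B * (c - a) \<le> 1/4" and cb: "continuous_on {a..c} b"
begin

lemma clp_bounds[simp]: "a \<le> clp a c t" "clp a c t \<le> c" using ac by (auto simp: clp_def)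

definition In :: "(real \<Rightarrow> real) \<Rightarrow> real \<Rightarrow> real" where "In z s = integral {a..s} (\<lambda>r. b r * z r)"
definition K :: "(real \<Rightarrow> real) \<Rightarrow> real \<Rightarrow> real" where "K z s = integral {a..s} (In z)"
definition Phi0 :: "(real \<Rightarrow> real) \<Rightarrow> real \<Rightarrow> real" where "Phi0 z t = 1 + (clp a c t - a) + K z (clp a c t)"

lemma bz_cont: "continuous_on {a..c} z \<Longrightarrow> continuous_on {a..c} (\<lambda>r. b r * z r)"
  by (intro continuous_on_mult cb)

lemma In_cont: "continuous_on {a..c} z \<Longrightarrow> continuous_on {a..c} (In z)"
  unfolding In_def[abs_def] by (intro indefinite_integral_continuous_1 integrable_continuous_interval bz_cont)

lemma K_cont: "continuous_on {a..c} z \<Longrightarrow> continuous_on {a..c} (K z)"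
  unfolding K_def[abs_def] by (intro indefinite_integral_continuous_1 integrable_continuous_interval In_cont)

lemma In_bound:
  assumes "continuous_on {a..c} z" "\<And>r. r \<in> {a..c} \<Longrightarrow> \<bar>z r\<bar> \<le> M" "s \<in> {a..c}"
  shows "\<bar>In z s\<bar> \<le> B * M * (c - a)"
proof -
  have M: "0 \<le> M" using assms(2)[of a] ac by auto
  have "norm (In z s) \<le> (B * M) * (s - a)"
    unfolding In_def using assms(3)
    apply (intro integral_bound)
      apply simp
     apply (rule continuous_on_subset[OF bz_cont[OF assms(1)]]) apply auto[1]
    apply (simp add: abs_mult)
    apply (intro mult_mono bB assms(2) B0) apply auto
    done
  also have "\<dots> \<le> (B * M) * (c - a)" using assms(3) B0 M by (intro mult_left_mono) auto
  finally show ?thesis by simp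
qed

lemma K_bound:
  assumes "continuous_on {a..c} z" "\<And>r. r \<in> {a..c} \<Longrightarrow> \<bar>z r\<bar> \<le> M" "s \<in> {a..c}"
  shows "\<bar>K z s\<bar> \<le> B * M * (c - a) * (c - a)"
proof -
  have M: "0 \<le> M" using assms(2)[of a] ac by auto
  have "norm (K z s) \<le> (B * M * (c - a)) * (s - a)"
    unfolding K_def using assms(3)
    apply (intro integral_bound)
      apply simp
     apply (rule continuous_on_subset[OF In_cont[OF assms(1)]]) apply auto[1]
    using In_bound[OF assms(1,2)] apply auto
    done
  also have "\<dots> \<le> (B * M * (c - a)) * (c - a)" using assms(3) B0 M ac by (intro mult_left_mono) auto
  finally show ?thesis by simp
qed

lemma In_diff:
  assumes "continuous_on {a..c} z1" "continuous_on {a..c} z2" "s \<in> {a..c}"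
  shows "In z1 s - In z2 s = In (\<lambda>r. z1 r - z2 r) s"
proof -
  have i: "(\<lambda>r. b r * z r) integrable_on {a..s}" if "continuous_on {a..c} z" for z
    using assms(3) by (intro integrable_continuous_interval continuous_on_subset[OF bz_cont[OF that]]) auto
  show ?thesis unfolding In_def
    using integral_diff[OF i[OF assms(1)] i[OF assms(2)]] by (simp add: right_diff_distrib)
qed

lemma K_diff:
  assumes "continuous_on {a..c} z1" "continuous_on {a..c} z2" "s \<in> {a..c}"
  shows "K z1 s - K z2 s = K (\<lambda>r. z1 r - z2 r) s"
proof -
  have i: "In z integrable_on {a..s}" if "continuous_on {a..c} z" for z
    using assms(3) by (intro integrable_continuous_interval continuous_on_subset[OF In_cont[OF that]]) auto
  have "K z1 s - K z2 s = integral {a..s} (\<lambda>r. In z1 r - In z2 r)"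
    unfolding K_def using integral_diff[OF i[OF assms(1)] i[OF assms(2)]] by simp
  also have "\<dots> = integral {a..s} (In (\<lambda>r. z1 r - z2 r))"
    using assms(3) by (intro integral_cong In_diff assms(1,2)) auto
  finally show ?thesis by (simp add: K_def)
qed

lemma Phi0_bcont: "Phi0 (apply_bcontfun z) \<in> bcontfun"
proof (rule bcontfun_normI)
  show "continuous_on UNIV (Phi0 (apply_bcontfun z))"
    unfolding Phi0_def[abs_def]
    by (intro continuous_intros cont_clp continuous_on_compose2[OF K_cont[of z] cont_clp]) (use clp_in ac in auto)
  fix t
  have "\<bar>K z (clp a c t)\<bar> \<le> B * norm z * (c - a) * (c - a)"
    by (rule K_bound) (auto simp: clp_in ac less_imp_le norm_bounded[of z, simplified])
  then show "norm (Phi0 z t) \<le> 1 + (c - a) + B * norm z * (c - a) * (c - a)"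
    using clp_bounds[of t] ac unfolding Phi0_def real_norm_def by (smt (verit))
qed

definition Phi :: "(real \<Rightarrow>\<^sub>C real) \<Rightarrow> (real \<Rightarrow>\<^sub>C real)" where "Phi z = Bcontfun (Phi0 z)"

lemma Phi_apply: "apply_bcontfun (Phi z) = Phi0 z"
  unfolding Phi_def using Phi0_bcont by (simp add: Bcontfun_inverse)

lemma Phi_contr: "dist (Phi z1) (Phi z2) \<le> (1/4) * dist z1 z2"
proof (rule dist_bound)
  fix t
  have ct: "clp a c t \<in> {a..c}" using clp_in ac by simp
  have "\<bar>Phi0 z1 t - Phi0 z2 t\<bar> = \<bar>K (\<lambda>r. z1 r - z2 r) (clp a c t)\<bar>"
    unfolding Phi0_def using K_diff[of z1 z2, OF _ _ ct] by simp
  also have "\<dots> \<le> B * dist z1 z2 * (c - a) * (c - a)"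
    by (rule K_bound) (auto intro!: continuous_intros ct simp: dist_bounded[of z1 _ z2, simplified dist_real_def])
  also have "\<dots> \<le> (1/4) * dist z1 z2"
  proof -
    have "B * (c - a) * (c - a) \<le> B * (c - a) * 1"
      using len ac B0 by (intro mult_left_mono) auto
    then have "B * (c - a) * (c - a) \<le> 1/4" using small by simp
    then show ?thesis using zero_le_dist[of z1 z2]
      by (metis mult.commute mult.left_commute mult_right_mono)
  qed
  finally show "dist (Phi z1 t) (Phi z2 t) \<le> (1/4) * dist z1 z2" by (simp add: Phi_apply dist_real_def)
qed

lemma ode_exists:
  "\<exists>y y1. \<forall>t\<in>{a<..<c}. (y has_real_derivative y1 t) (at t) \<and> (y1 has_real_derivative b t * y t) (at t)
      \<and> y t > 0 \<and> y1 t > 0"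
proof -
  obtain z where z: "Phi z = z"
    using banach_fix_type[of "1/4" Phi] Phi_contr by auto
  have zt: "z t = Phi0 z t" for t using z Phi_apply by metis
  have nz: "norm z \<le> 8/3"
  proof -
    have "norm z \<le> 2 + (1/4) * norm z"
    proof (rule norm_bound)
      fix t
      have "\<bar>K z (clp a c t)\<bar> \<le> B * norm z * (c - a) * (c - a)"
        by (rule K_bound) (auto simp: clp_in ac less_imp_le norm_bounded[of z, simplified])
      also have "\<dots> \<le> (1/4) * norm z"
      proof -
        have "B * (c - a) * (c - a) \<le> B * (c - a) * 1"
          using len ac B0 by (intro mult_left_mono) auto
        then have "B * (c - a) * (c - a) \<le> 1/4" using small by simp
        then show ?thesis using norm_ge_zero[of z]
          by (metis mult.commute mult.left_commute mult_right_mono)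
      qed
      finally show "norm (z t) \<le> 2 + (1/4) * norm z"
        using zt[of t] clp_bounds[of t] ac len unfolding Phi0_def real_norm_def by (smt (verit))
    qed
    then show ?thesis by simp
  qed
  define y where "y t = 1 + (t - a) + K z t" for t
  define y1 where "y1 t = 1 + In z t" for t
  have yz: "y t = z t" if "t \<in> {a..c}" for t using zt[of t] that by (simp add: Phi0_def clp_id y_def)
  have zb: "\<bar>z r\<bar> \<le> 8/3" for r using norm_bounded[of z r] nz by simp
  show ?thesis
  proof (intro exI ballI conjI)
    fix t assume t: "t \<in> {a<..<c}"
    then have t': "t \<in> {a..c}" by auto
    have atw: "at t within {a..c} = at t" using t by (simp add: at_within_Icc_at)
    have "(K z has_real_derivative In z t) (at t)"
      using integral_has_real_derivative[OF In_cont[of z] t'] atw by (simp add: K_def[abs_def])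
    then show "(y has_real_derivative y1 t) (at t)"
      unfolding y_def[abs_def] y1_def by (auto intro!: derivative_eq_intros)
    have "(In z has_real_derivative b t * z t) (at t)"
      using integral_has_real_derivative[OF bz_cont[of z] t'] atw by (simp add: In_def[abs_def])
    then show "(y1 has_real_derivative b t * y t) (at t)"
      unfolding y1_def[abs_def] using yz[OF t'] by (auto intro!: derivative_eq_intros)
    have cB: "B * (c - a) * (c - a) \<le> 1/4"
    proof -
      have "B * (c - a) * (c - a) \<le> B * (c - a) * 1"
        using len ac B0 by (intro mult_left_mono) auto
      then show ?thesis using small by simp
    qed
    have "\<bar>K z t\<bar> \<le> B * (8/3) * (c - a) * (c - a)"
      by (rule K_bound[OF _ _ t']) (use zb in auto)
    then have "\<bar>K z t\<bar> \<le> 2/3" using cB by (simp add: algebra_simps)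
    then show "y t > 0" using t unfolding y_def by auto
    have "\<bar>In z t\<bar> \<le> B * (8/3) * (c - a)"
      by (rule In_bound[OF _ _ t']) (use zb in auto)
    then have "\<bar>In z t\<bar> \<le> 2/3" using small by (simp add: algebra_simps)
    then show "y1 t > 0" unfolding y1_def by auto
  qed
qed

end

definition su :: "nat \<Rightarrow> real set \<Rightarrow> (real \<Rightarrow> real) \<Rightarrow> bool" where
  "su n I F \<longleftrightarrow> (\<forall>k\<le>n. \<forall>t\<in>I. (deriv ^^ k) F field_differentiable (at t))"

lemma deriv_loc:
  assumes "open I" "t \<in> I" "\<And>s. s \<in> I \<Longrightarrow> F s = G s"
  shows "deriv F t = deriv G t"
proof -
  have "eventually (\<lambda>s. s \<in> I) (nhds t)" using assms(1,2) by (rule eventually_nhds_in_open)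
  then have "eventually (\<lambda>s. F s = G s) (nhds t)" by eventually_elim (use assms(3) in auto)
  then show ?thesis by (rule deriv_cong_ev) simp
qed

lemma derivk_loc:
  assumes "open I" "\<And>s. s \<in> I \<Longrightarrow> F s = G s" "t \<in> I"
  shows "(deriv ^^ k) F t = (deriv ^^ k) G t"
  using assms(3)
proof (induction k arbitrary: t)
  case 0 then show ?case using assms(2) by simp
next
  case (Suc k)
  show ?case using deriv_loc[OF assms(1) Suc.prems Suc.IH] by simp
qed

lemma fd_loc:
  assumes "open I" "t \<in> I" "\<And>s. s \<in> I \<Longrightarrow> F s = G s" "F field_differentiable (at t)"
  shows "G field_differentiable (at t)"
proof -
  obtain D where "(F has_field_derivative D) (at t)" using assms(4) field_differentiable_def by blast
  then have "(G has_field_derivative D) (at t)"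
    by (rule has_field_derivative_transform_within_open[OF _ assms(1,2)]) (use assms(3) in auto)
  then show ?thesis using field_differentiable_def by blast
qed

lemma su_cong:
  assumes "open I" "su n I F" "\<And>s. s \<in> I \<Longrightarrow> F s = G s"
  shows "su n I G"
  unfolding su_def
proof (intro allI impI ballI)
  fix k t assume "k \<le> n" "t \<in> I"
  then have *: "(deriv ^^ k) F field_differentiable (at t)" using assms(2) su_def by blast
  show "(deriv ^^ k) G field_differentiable (at t)"
    by (rule fd_loc[OF assms(1) \<open>t \<in> I\<close> derivk_loc[OF assms(1,3)] *])
qed

lemma su_Suc: "su (Suc n) I F \<longleftrightarrow> (\<forall>t\<in>I. F field_differentiable (at t)) \<and> su n I (deriv F)"
proof -
  have e: "(deriv ^^ Suc k) F = (deriv ^^ k) (deriv F)" for k by (simp add: funpow_Suc_right del: funpow.simps)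
  show ?thesis
    unfolding su_def
    apply (rule iffI)
     apply (intro conjI)
      apply (metis funpow_0 id_apply le0)
     apply (metis e Suc_le_mono)
    apply (intro allI impI ballI)
    subgoal for k t by (cases k) (auto simp: e simp del: funpow.simps)
    done
qed

lemma su_mono: "m \<le> n \<Longrightarrow> su n I F \<Longrightarrow> su m I F"
  unfolding su_def by auto

lemma su_const: "su n I (\<lambda>t. c)"
proof (induction n arbitrary: c)
  case 0 then show ?case by (simp add: su_def)
next
  case (Suc n)
  have "deriv (\<lambda>t. c) = (\<lambda>t. 0)" by (simp add: fun_eq_iff)
  then show ?case using su_Suc[of n I "\<lambda>t. c"] by (simp add: Suc.IH[of 0])
qed

lemma su_add: "open I \<Longrightarrow> su n I F \<Longrightarrow> su n I G \<Longrightarrow> su n I (\<lambda>t. F t + G t)"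
proof (induction n arbitrary: F G)
  case 0 then show ?case by (auto simp: su_def intro: field_differentiable_add)
next
  case (Suc n)
  have dF: "\<forall>t\<in>I. F field_differentiable (at t)" and dG: "\<forall>t\<in>I. G field_differentiable (at t)"
    using Suc.prems su_Suc by blast+
  have "su n I (\<lambda>t. deriv F t + deriv G t)" using Suc su_Suc by blast
  then have "su n I (deriv (\<lambda>t. F t + G t))"
    by (rule su_cong[OF Suc.prems(1)]) (use dF dG in \<open>auto intro!: deriv_add[symmetric]\<close>)
  then show ?case using dF dG su_Suc by (auto intro: field_differentiable_add)
qed

lemma su_mult: "open I \<Longrightarrow> su n I F \<Longrightarrow> su n I G \<Longrightarrow> su n I (\<lambda>t. F t * G t)"
proof (induction n arbitrary: F G)
  case 0 then show ?case by (auto simp: su_def intro: field_differentiable_mult)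
next
  case (Suc n)
  have dF: "\<forall>t\<in>I. F field_differentiable (at t)" and dG: "\<forall>t\<in>I. G field_differentiable (at t)"
    and sF: "su n I (deriv F)" and sG: "su n I (deriv G)"
    using Suc.prems su_Suc by blast+
  have sF': "su n I F" "su n I G" using Suc.prems su_mono[of n "Suc n"] by auto
  have "su n I (\<lambda>t. F t * deriv G t + deriv F t * G t)"
    by (intro su_add Suc.IH Suc.prems(1) sF sG sF')
  then have "su n I (deriv (\<lambda>t. F t * G t))"
    by (rule su_cong[OF Suc.prems(1)]) (use dF dG in auto)
  then show ?case using dF dG su_Suc by (auto intro: field_differentiable_mult)
qed

definition smooth1 :: "real set \<Rightarrow> (real \<Rightarrow> real) \<Rightarrow> bool" where
  "smooth1 I F \<longleftrightarrow> (\<forall>n. su n I F)"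

lemma pd_Ucomp: "pd i (\<lambda>q. G (q $ U)) q = (if i = U then deriv G (q $ U) else 0)"
proof (cases "i = U")
  case True
  have "(\<lambda>D. ((\<lambda>t. G ((q + t *\<^sub>R axis i 1) $ U)) has_field_derivative D) (at 0))
      = (\<lambda>D. (G has_field_derivative D) (at (q $ U)))"
    using True DERIV_shift[of G _ 0 "q $ U"] by (simp add: axis_def add.commute fun_eq_iff)
  then show ?thesis using True by (simp add: pd_def deriv_def)
next
  case False
  then show ?thesis by (simp add: pd_def axis_def)
qed


lemma diff_Ucomp:
  assumes "G differentiable (at (q $ U))" shows "(\<lambda>q. G (q $ U)) differentiable (at q)"
proof -
  have "(G \<circ> (\<lambda>q. q $ U)) differentiable (at q)"
    by (rule differentiable_chain_at) (auto intro: bounded_linear_imp_differentiable assms)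
  then show ?thesis by (simp add: o_def)
qed

lemma pds_Ucomp:
  assumes oW: "open W" and WI: "\<And>q. q \<in> W \<Longrightarrow> q $ U \<in> I"
  shows "q \<in> W \<Longrightarrow> pds is (\<lambda>q. F (q $ U)) q = (if set is \<subseteq> {U} then (deriv ^^ length is) F (q $ U) else 0)"
proof (induction "is" arbitrary: q)
  case Nil then show ?case by simp
next
  case (Cons i "is")
  have "pds (i # is) (\<lambda>q. F (q $ U)) q = pd i (\<lambda>q. if set is \<subseteq> {U} then (deriv ^^ length is) F (q $ U) else 0) q"
    using pd_local[OF oW Cons.prems, of "pds is (\<lambda>q. F (q $ U))"] Cons.IH by simp
  also have "\<dots> = (if set (i # is) \<subseteq> {U} then (deriv ^^ length (i # is)) F (q $ U) else 0)"
    by (cases "set is \<subseteq> {U}") (auto simp: pd_Ucomp)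
  finally show ?case .
qed

lemma Cinf_lift:
  assumes oW: "open W" and oI: "open I" and WI: "\<And>q. q \<in> W \<Longrightarrow> q $ U \<in> I" and sF: "smooth1 I F"
  shows "Cinf_on W (\<lambda>q. F (q $ U))"
  unfolding Cinf_on_def
proof (intro allI differentiable_at_imp_differentiable_on)
  fix "is" q assume q: "q \<in> W"
  define K where "K q = (if set is \<subseteq> {U} then (deriv ^^ length is) F (q $ U) else 0)" for q
  have "(deriv ^^ length is) F field_differentiable (at (q $ U))"
    using sF WI[OF q] unfolding smooth1_def su_def by blast
  then have "K differentiable (at q)"
    unfolding K_def by (cases "set is \<subseteq> {U}") (auto intro!: diff_Ucomp field_differentiable_imp_differentiable)
  then obtain D where D: "(K has_derivative D) (at q)" using differentiable_def by blast
  have "(pds is (\<lambda>q. F (q $ U)) has_derivative D) (at q)"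
    by (rule has_derivative_transform_within_open[OF D oW q]) (use pds_Ucomp[OF oW WI] K_def in auto)
  then show "pds is (\<lambda>q. F (q $ U)) differentiable (at q)" using differentiable_def by blast
qed

lemma line_deriv_v:
  fixes G :: "real^'n::finite \<Rightarrow> real"
  assumes "G differentiable (at (x + s *\<^sub>R v))"
  shows "((\<lambda>t. G (x + t *\<^sub>R v)) has_real_derivative (\<Sum>i\<in>UNIV. v $ i * pd i G (x + s *\<^sub>R v))) (at s)"
proof -
  have d1: "((\<lambda>t::real. x + t *\<^sub>R v) has_derivative (\<lambda>t. t *\<^sub>R v)) (at s)"
    by (auto intro!: derivative_eq_intros)
  have "((\<lambda>t. G (x + t *\<^sub>R v)) has_derivative
      (\<lambda>t. \<Sum>k\<in>UNIV. (t *\<^sub>R v) $ k * pd k G (x + s *\<^sub>R v))) (at s)"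
    using diff_chain_at[OF d1 diff_hasD[OF assms]] by (simp add: o_def)
  moreover have "(\<lambda>t. \<Sum>k\<in>UNIV. (t *\<^sub>R v) $ k * pd k G (x + s *\<^sub>R v))
     = (*) (\<Sum>i\<in>UNIV. v $ i * pd i G (x + s *\<^sub>R v))"
    by (auto simp: fun_eq_iff sum_distrib_right intro!: sum.cong)
  ultimately show ?thesis by (simp add: has_field_derivative_def)
qed

lemma deriv_shift0: "deriv (\<lambda>t. h (u + t)) 0 = deriv h (u::real)"
proof -
  have "(\<lambda>D. ((\<lambda>t. h (u + t)) has_field_derivative D) (at 0)) = (\<lambda>D. (h has_field_derivative D) (at u))"
    using DERIV_shift[of h _ 0 u] by (simp add: add.commute fun_eq_iff)
  then show ?thesis by (simp add: deriv_def)
qed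

lemma deriv_line: "deriv (\<lambda>s. P (x0 + s *\<^sub>R axis i 1)) u = pd i P (x0 + u *\<^sub>R axis i (1::real))"
proof -
  have "pd i P (x0 + u *\<^sub>R axis i 1) = deriv (\<lambda>t. (\<lambda>s. P (x0 + s *\<^sub>R axis i 1)) (u + t)) 0"
    by (simp add: pd_def scaleR_add_left add.assoc)
  also have "\<dots> = deriv (\<lambda>s. P (x0 + s *\<^sub>R axis i 1)) u" by (rule deriv_shift0)
  finally show ?thesis by simp
qed

lemma pds_append: "pds is (pds js F) = pds (is @ js) F"
  by (induction "is") auto

context ppsetup
begin

lemma dHD: "y \<in> D \<Longrightarrow> pds is H differentiable (at y)"
  using Cinf_diff[OF oD sH] by simp

lemma dRfD: "y \<in> D \<Longrightarrow> Rf H differentiable (at y)"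
  unfolding Rf_def using dHD[of y "[X13,X13]"] dHD[of y "[X23,X23]"] by simp

lemma su_comp_line:
  assumes oI: "open I" and ID: "\<And>u. u \<in> I \<Longrightarrow> x0 + u *\<^sub>R axis U3 1 \<in> D"
  shows "su n I (\<lambda>u. pds js H (x0 + u *\<^sub>R axis U3 1))"
proof -
  have e: "(deriv ^^ k) (\<lambda>u. pds js H (x0 + u *\<^sub>R axis U3 1)) = (\<lambda>u. pds (replicate k U3 @ js) H (x0 + u *\<^sub>R axis U3 1))" for k
  proof (induction k)
    case 0 then show ?case by simp
  next
    case (Suc k)
    show ?case
      by (simp add: Suc fun_eq_iff deriv_line)
  qed
  show ?thesis unfolding su_def e
  proof (intro allI impI ballI)
    fix k t assume "t \<in> I"
    then have "pds (replicate k U3 @ js) H differentiable (at (x0 + t *\<^sub>R axis U3 1))"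
      using dHD ID by blast
    then show "(\<lambda>u. pds (replicate k U3 @ js) H (x0 + u *\<^sub>R axis U3 1)) field_differentiable (at t)"
      using line_deriv[of "pds (replicate k U3 @ js) H" x0 t U3] field_differentiable_def by blast
  qed
qed

lemma Rf_const:
  assumes hyp: "\<forall>y\<in>D. pd X13 (Rf H) y = 0 \<and> pd X23 (Rf H) y = 0"
    and r: "ball y0 r \<subseteq> D" and z: "z \<in> ball y0 r"
  shows "Rf H z = Rf H (y0 + (z $ U3 - y0 $ U3) *\<^sub>R axis U3 1)"
proof -
  define e' where "e' = y0 + (z $ U3 - y0 $ U3) *\<^sub>R axis U3 1"
  define d where "d = z - e'"
  have dU: "d $ U3 = 0" by (simp add: d_def e'_def axis_def)
  have e'b: "e' \<in> ball y0 r"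
  proof -
    have "norm (e' - y0) = \<bar>(z - y0) $ U3\<bar>" by (simp add: e'_def)
    also have "\<dots> \<le> norm (z - y0)" by (rule component_le_norm_cart)
    finally show ?thesis using z by (simp add: dist_norm norm_minus_commute)
  qed
  have seg: "e' + s *\<^sub>R d \<in> ball y0 r" if "0 \<le> s" "s \<le> 1" for s
  proof -
    have "e' + s *\<^sub>R d = (1 - s) *\<^sub>R e' + s *\<^sub>R z" by (simp add: d_def algebra_simps)
    then show ?thesis using convexD[OF convex_ball e'b z, of "1 - s" s] that by simp
  qed
  define g where "g s = Rf H (e' + s *\<^sub>R d)" for s
  have der: "DERIV g s :> 0" if "0 \<le> s" "s \<le> 1" for s
  proof -
    have inD: "e' + s *\<^sub>R d \<in> D" using seg[OF that] r by auto
    have "DERIV g s :> (\<Sum>i\<in>UNIV. d $ i * pd i (Rf H) (e' + s *\<^sub>R d))"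
      unfolding g_def by (rule line_deriv_v[OF dRfD[OF inD]])
    also have "(\<Sum>i\<in>UNIV. d $ i * pd i (Rf H) (e' + s *\<^sub>R d)) = 0"
      using hyp inD dU by (simp add: UNIV_coord3)
    finally show ?thesis .
  qed
  obtain \<xi> where "g 1 - g 0 = (1 - 0) * 0" using MVT2[of 0 1 g "\<lambda>_. 0"] der by auto
  then show ?thesis by (simp add: g_def d_def e'_def)
qed

end

lemma F_exists:
  fixes a c B :: real and b :: "real \<Rightarrow> real"
  assumes ac: "a < c" and len: "c - a \<le> 1" and B0: "0 \<le> B" and bB: "\<And>t. t \<in> {a..c} \<Longrightarrow> \<bar>b t\<bar> \<le> B"
    and small: "B * (c - a) \<le> 1/4" and cb: "continuous_on {a..c} b" and sb: "\<And>n. su n {a<..<c} b"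
  shows "\<exists>F. smooth1 {a<..<c} F \<and> (\<forall>t\<in>{a<..<c}. deriv F t \<noteq> 0 \<and>
            deriv (deriv F) t + (1/2) * (deriv F t)^2 = 2 * b t)"
proof -
  interpret o: ode a c B b using assms by unfold_locales auto
  obtain y y1 where yy: "\<And>t. t \<in> {a<..<c} \<Longrightarrow> (y has_real_derivative y1 t) (at t) \<and> (y1 has_real_derivative b t * y t) (at t)
      \<and> y t > 0 \<and> y1 t > 0"
    using o.ode_exists by blast
  define I where "I = {a<..<c}"
  have oI: "open I" by (simp add: I_def)
  have dy: "\<And>t. t \<in> I \<Longrightarrow> (y has_real_derivative y1 t) (at t)"
   and dy1: "\<And>t. t \<in> I \<Longrightarrow> (y1 has_real_derivative b t * y t) (at t)"
   and yp: "\<And>t. t \<in> I \<Longrightarrow> y t > 0" and y1p: "\<And>t. t \<in> I \<Longrightarrow> y1 t > 0"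
    using yy unfolding I_def by auto
  have fdy: "\<forall>t\<in>I. y field_differentiable (at t)" using dy field_differentiable_def by blast
  have fdy1: "\<forall>t\<in>I. y1 field_differentiable (at t)" using dy1 field_differentiable_def by blast
  have sbI: "su n I b" for n using sb I_def by simp
  have sy: "su n I y \<and> su n I y1" for n
  proof (induction n)
    case 0 then show ?case using fdy fdy1 by (simp add: su_def)
  next
    case (Suc n)
    have "su n I (deriv y)" by (rule su_cong[OF oI conjunct2[OF Suc]]) (simp add: DERIV_imp_deriv[OF dy])
    moreover have "su n I (deriv y1)"
      by (rule su_cong[OF oI su_mult[OF oI sbI conjunct1[OF Suc]]]) (simp add: DERIV_imp_deriv[OF dy1])
    ultimately show ?case using fdy fdy1 by (simp add: su_Suc)
  qed
  define z where "z t = inverse (y t)" for t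
  have dz: "(z has_real_derivative (- y1 t * z t * z t)) (at t)" if t: "t \<in> I" for t
  proof -
    have "((\<lambda>t. inverse (y t)) has_real_derivative - (inverse (y t) * y1 t * inverse (y t))) (at t)"
      by (rule DERIV_inverse'[OF dy[OF t]]) (use yp[OF t] in simp)
    moreover have "- (inverse (y t) * y1 t * inverse (y t)) = - y1 t * z t * z t"
      by (simp add: z_def)
    ultimately show ?thesis by (simp add: z_def[abs_def])
  qed
  have fdz: "\<forall>t\<in>I. z field_differentiable (at t)" using dz field_differentiable_def by blast
  have sz: "su n I z" for n
  proof (induction n)
    case 0 then show ?case using fdz by (simp add: su_def)
  next
    case (Suc n)
    have "su n I (\<lambda>t. ((-1) * y1 t) * z t * z t)"
      by (intro su_mult oI su_const Suc sy[THEN conjunct2])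
    then have "su n I (deriv z)"
      by (rule su_cong[OF oI]) (simp add: DERIV_imp_deriv[OF dz])
    then show ?case using fdz by (simp add: su_Suc)
  qed
  define F where "F t = 2 * ln (y t)" for t
  have dF: "(F has_real_derivative (2 * y1 t * z t)) (at t)" if t: "t \<in> I" for t
  proof -
    have "((\<lambda>t. ln (y t)) has_real_derivative 1 / y t * y1 t) (at t)"
      by (rule DERIV_chain2[OF DERIV_ln_divide[OF yp[OF t]] dy[OF t]])
    then have "((\<lambda>t. 2 * ln (y t)) has_real_derivative 2 * (1 / y t * y1 t)) (at t)"
      by (rule DERIV_cmult)
    moreover have "2 * (1 / y t * y1 t) = 2 * y1 t * z t" by (simp add: z_def divide_inverse)
    ultimately show ?thesis by (simp add: F_def[abs_def])
  qed
  have fdF: "\<forall>t\<in>I. F field_differentiable (at t)" using dF field_differentiable_def by blast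
  have dFe: "deriv F t = 2 * y1 t * z t" if "t \<in> I" for t using dF[OF that] DERIV_imp_deriv by blast
  have sF: "su n I F" for n
  proof (cases n)
    case 0 then show ?thesis using fdF by (simp add: su_def)
  next
    case (Suc m)
    have "su m I (\<lambda>t. 2 * y1 t * z t)" by (intro su_mult oI su_const sz sy[THEN conjunct2])
    then have "su m I (deriv F)" by (rule su_cong[OF oI]) (simp add: dFe)
    then show ?thesis using Suc fdF by (simp add: su_Suc)
  qed
  show ?thesis
  proof (intro exI conjI ballI)
    show "smooth1 {a<..<c} F" using sF by (simp add: smooth1_def I_def)
    fix t assume t0: "t \<in> {a<..<c}"
    then have t: "t \<in> I" by (simp add: I_def)
    have zp: "z t > 0" using yp[OF t] by (simp add: z_def)
    show "deriv F t \<noteq> 0" using dFe[OF t] y1p[OF t] zp by simp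
    have "((\<lambda>t. 2 * y1 t * z t) has_real_derivative (2 * (b t * y t)) * z t + (- y1 t * z t * z t) * (2 * y1 t)) (at t)"
      by (rule DERIV_mult[OF DERIV_cmult[OF dy1[OF t]] dz[OF t]])
    then have "deriv (\<lambda>t. 2 * y1 t * z t) t = (2 * (b t * y t)) * z t + (- y1 t * z t * z t) * (2 * y1 t)"
      by (rule DERIV_imp_deriv)
    moreover have "deriv (deriv F) t = deriv (\<lambda>t. 2 * y1 t * z t) t"
      by (rule deriv_loc[OF oI t]) (use dFe in auto)
    moreover have "y t * z t = 1" using yp[OF t] by (simp add: z_def)
    ultimately have "deriv (deriv F) t = 2 * b t * (y t * z t) - 2 * (y1 t * z t) * (y1 t * z t)"
      by (simp add: algebra_simps)
    then show "deriv (deriv F) t + (1/2) * (deriv F t)^2 = 2 * b t"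
      using dFe[OF t] \<open>y t * z t = 1\<close> by (simp add: power2_eq_square algebra_simps)
  qed
qed

lemma grad_ppw: "grad (ppw H) f y = (\<chi> k. if k = U then pd V f y else if k = V then pd U f y - H (proj3 y) * pd V f y
   else if k = X1 then pd X1 f y else pd X2 f y)"
  unfolding grad_def ginv_ppw
  by (auto simp: vec_eq_iff matrix_vector_mult_def sum_coord Gi_def) (metis coord.exhaust)+

lemma gval_ppw: "gval (ppw H) y (grad (ppw H) f y) (grad (ppw H) f y) =
   2 * pd U f y * pd V f y - H (proj3 y) * (pd V f y)^2 + (pd X1 f y)^2 + (pd X2 f y)^2"
  unfolding gval_def grad_ppw by (simp add: sum_coord ppw_def power2_eq_square algebra_simps)

context ppsetup
begin

lemma forward:
  assumes hyp: "\<forall>y\<in>D. pd X13 (Rf H) y = 0 \<and> pd X23 (Rf H) y = 0"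
  shows "loc_iso_conf_einstein (ppw H) Om"
  unfolding loc_iso_conf_einstein_def
proof
  fix p assume pO: "p \<in> Om"
  define y0 where "y0 = proj3 p"
  have y0D: "y0 \<in> D" using pO by (simp add: y0_def)
  obtain r where r: "r > 0" "ball y0 r \<subseteq> D" using oD y0D open_contains_ball by blast
  define u0 where "u0 = y0 $ U3"
  define x0 where "x0 = y0 - u0 *\<^sub>R axis U3 1"
  define e where "e u = x0 + u *\<^sub>R axis U3 1" for u
  have e_alt: "e u = y0 + (u - u0) *\<^sub>R axis U3 1" for u by (simp add: e_def x0_def algebra_simps)
  have eb: "e u \<in> ball y0 r" if "\<bar>u - u0\<bar> < r" for u
    using that by (simp add: e_alt dist_norm)
  have eD: "e u \<in> D" if "\<bar>u - u0\<bar> < r" for u using eb[OF that] r by auto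
  define b where "b u = (1/4) * pds [X13,X13] H (e u) + (1/4) * pds [X23,X23] H (e u)" for u
  have bR: "b u = -(1/2) * Rf H (e u)" for u by (simp add: b_def Rf_def field_simps)
  define r1 where "r1 = r / 2"
  define J where "J = {u0 - r1 .. u0 + r1}"
  have JD: "\<bar>u - u0\<bar> < r" if "u \<in> J" for u using that r by (auto simp: J_def r1_def)
  have cb: "continuous_on J b"
  proof -
    have "continuous_on J (\<lambda>u. Rf H (e u))"
    proof (rule continuous_at_imp_continuous_on, rule ballI)
      fix u assume u: "u \<in> J"
      have "continuous (at (e u)) (Rf H)"
        using dRfD[OF eD[OF JD[OF u]]] differentiable_imp_continuous_within by blast
      moreover have "continuous (at u) e" unfolding e_def by (intro continuous_intros)
      ultimately show "continuous (at u) (\<lambda>u. Rf H (e u))" using continuous_at_compose[of u e "Rf H"] by (simp add: o_def)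
    qed
    then show ?thesis unfolding bR by (intro continuous_intros)
  qed
  obtain B0 where B0: "\<And>u. u \<in> J \<Longrightarrow> \<bar>b u\<bar> \<le> B0"
  proof -
    have "compact (b ` J)" using compact_continuous_image[OF cb] by (simp add: J_def)
    then have "bounded (b ` J)" by (rule compact_imp_bounded)
    then obtain B0 where "\<forall>x\<in>b ` J. norm x \<le> B0" using bounded_iff by blast
    then show ?thesis using that by auto
  qed
  define B where "B = \<bar>B0\<bar>"
  have bB: "\<bar>b u\<bar> \<le> B" if "u \<in> J" for u using B0[OF that] by (simp add: B_def)
  define h where "h = min r1 (min 1 (1 / (4 * (B + 1))))"
  have Bp: "0 \<le> B" by (simp add: B_def)
  have hp: "h > 0" using r Bp by (simp add: h_def r1_def)
  have h1: "h \<le> 1" "h \<le> r1" "h \<le> 1 / (4 * (B + 1))" by (simp_all add: h_def)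
  have Bh: "B * h \<le> 1/4"
  proof -
    have "B * h \<le> B * (1 / (4 * (B + 1)))" using h1(3) Bp by (rule mult_left_mono)
    also have "\<dots> \<le> 1/4" using Bp by (simp add: field_simps)
    finally show ?thesis .
  qed
  define a where "a = u0 - h/2"
  define c where "c = u0 + h/2"
  have acJ: "{a..c} \<subseteq> J" using h1 hp by (auto simp: a_def c_def J_def)
  define I where "I = {a<..<c}"
  have IJ: "I \<subseteq> J" using acJ by (auto simp: I_def)
  have oI: "open I" by (simp add: I_def)
  have sb: "su n {a<..<c} b" for n
  proof -
    have ID: "x0 + u *\<^sub>R axis U3 1 \<in> D" if "u \<in> I" for u using eD[OF JD] IJ that by (auto simp: e_def)
    have "su n I b" unfolding b_def e_def
      by (intro su_add su_mult su_const oI su_comp_line ID)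
    then show ?thesis by (simp add: I_def)
  qed
  obtain F where sF: "smooth1 {a<..<c} F"
    and FF: "\<And>t. t \<in> {a<..<c} \<Longrightarrow> deriv F t \<noteq> 0 \<and> deriv (deriv F) t + (1/2) * (deriv F t)^2 = 2 * b t"
  proof -
    have ca: "c - a = h" by (simp add: a_def c_def)
    have "\<exists>F. smooth1 {a<..<c} F \<and> (\<forall>t\<in>{a<..<c}. deriv F t \<noteq> 0 \<and>
            deriv (deriv F) t + (1/2) * (deriv F t)^2 = 2 * b t)"
    proof (rule F_exists)
      show "a < c" using hp by (simp add: a_def c_def)
      show "c - a \<le> 1" using h1 ca by simp
      show "0 \<le> B" by (fact Bp)
      show "\<bar>b t\<bar> \<le> B" if "t \<in> {a..c}" for t using bB acJ that by blast
      show "B * (c - a) \<le> 1/4" using Bh ca by simp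
      show "continuous_on {a..c} b" by (rule continuous_on_subset[OF cb acJ])
      show "su n {a<..<c} b" for n by (rule sb)
    qed
    then show ?thesis using that by blast
  qed
  define W where "W = {q. proj3 q \<in> ball y0 r} \<inter> {q. q $ U \<in> I}"
  have oW: "open W" unfolding W_def
    using open_Omega[OF open_ball] open_vimage_vec_nth[OF oI, of U] by (auto simp: vimage_def)
  have pW: "p \<in> W" using hp r(1) by (simp add: W_def I_def y0_def a_def c_def u0_def proj3_def)
  have WO: "W \<subseteq> Om" using r by (auto simp: W_def)
  define f where "f q = F (q $ U)" for q
  have Cf: "Cinf_on W f" unfolding f_def[abs_def]
    by (rule Cinf_lift[OF oW oI _ sF[folded I_def]]) (simp add: W_def)
  have pdf: "pd k f q = (if k = U then deriv F (q $ U) else 0)" for k q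
    unfolding f_def[abs_def] by (rule pd_Ucomp)
  have pdf_fun: "pd j f = (\<lambda>q. if j = U then deriv F (q $ U) else 0)" for j
    by (simp add: fun_eq_iff pdf)
  have pdff: "pd i (pd j f) q = (if j = U \<and> i = U then deriv (deriv F) (q $ U) else 0)" for i j q
    by (cases "j = U") (simp_all add: pdf_fun pd_Ucomp)
  have key: "deriv (deriv F) (q $ U) + Rf H (proj3 q) + (1/2) * (deriv F (q $ U))^2 = 0"
    and nz: "deriv F (q $ U) \<noteq> 0" if q: "q \<in> W" for q
  proof -
    have qI: "q $ U \<in> {a<..<c}" using q by (simp add: W_def I_def)
    have "Rf H (proj3 q) = Rf H (y0 + ((proj3 q) $ U3 - y0 $ U3) *\<^sub>R axis U3 1)"
      by (rule Rf_const[OF hyp r(2)]) (use q in \<open>simp add: W_def\<close>)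
    also have "\<dots> = Rf H (e (q $ U))" by (simp add: e_alt u0_def proj3_def)
    finally have "Rf H (proj3 q) = - 2 * b (q $ U)" by (simp add: bR)
    then show "deriv (deriv F) (q $ U) + Rf H (proj3 q) + (1/2) * (deriv F (q $ U))^2 = 0"
      using FF[OF qI] by simp
    show "deriv F (q $ U) \<noteq> 0" using FF[OF qI] by simp
  qed
  show "\<exists>W f lam. open W \<and> p \<in> W \<and> W \<subseteq> Om \<and> Cinf_on W f \<and>
       (\<forall>q\<in>W. grad (ppw H) f q \<noteq> 0 \<and> gval (ppw H) q (grad (ppw H) f q) (grad (ppw H) f q) = 0 \<and>
          (\<forall>i j. hess (ppw H) f i j q + ricci (ppw H) i j q + (1/2) * pd i f q * pd j f q
                 = lam q * ppw H q $ i $ j))"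
  proof (intro exI conjI ballI allI)
    show "open W" "p \<in> W" "W \<subseteq> Om" "Cinf_on W f" by (fact oW pW WO Cf)+
    fix q assume q: "q \<in> W"
    have qO: "q \<in> Om" using q WO by auto
    show "grad (ppw H) f q \<noteq> 0"
    proof
      assume "grad (ppw H) f q = 0"
      then have "grad (ppw H) f q $ V = 0" by simp
      then show False using nz[OF q] by (simp add: grad_ppw pdf)
    qed
    show "gval (ppw H) q (grad (ppw H) f q) (grad (ppw H) f q) = 0"
      by (simp add: gval_ppw pdf)
    fix i j
    show "hess (ppw H) f i j q + ricci (ppw H) i j q + (1/2) * pd i f q * pd j f q = (\<lambda>_. 0) q * ppw H q $ i $ j"
      unfolding hess_def chr_ppw
      using key[OF q]
      by (cases i; cases j) (simp_all add: ricci[OF qO] pdff pdf sum_coord Cf_def power2_eq_square)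
  qed
qed

end

theorem main:
  fixes H :: "real^coord3 \<Rightarrow> real" and D :: "(real^coord3) set"
  assumes "open D" and "Cinf_on D H"
  shows "loc_iso_conf_einstein (ppw H) {p. proj3 p \<in> D} \<longleftrightarrow>
         harmonic_weyl (ppw H) {p. proj3 p \<in> D}"
proof -
  interpret ppsetup H D using assms by unfold_locales
  show ?thesis
  proof
    assume L: "loc_iso_conf_einstein (ppw H) Om"
    have "\<forall>y\<in>D. pd X13 (Rf H) y = 0 \<and> pd X23 (Rf H) y = 0"
    proof
      fix y assume yD: "y \<in> D"
      obtain q where q: "proj3 q = y" using proj3_surj by blast
      then have qO: "q \<in> Om" using yD by simp
      obtain W f lam where W: "open W" "q \<in> W" "W \<subseteq> Om" "Cinf_on W f"
        and P: "\<forall>q\<in>W. grad (ppw H) f q \<noteq> 0 \<and> gval (ppw H) q (grad (ppw H) f q) (grad (ppw H) f q) = 0 \<and>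
          (\<forall>i j. hess (ppw H) f i j q + ricci (ppw H) i j q + (1/2) * pd i f q * pd j f q
                 = lam q * ppw H q $ i $ j)"
        using bspec[OF L[unfolded loc_iso_conf_einstein_def] qO] by auto
      interpret qe H D W f lam using W P by unfold_locales auto
      show "pd X13 (Rf H) y = 0 \<and> pd X23 (Rf H) y = 0" using stepB1[OF W(2)] stepB2[OF W(2)] q by simp
    qed
    then show "harmonic_weyl (ppw H) Om" using harmonic_iff by simp
  next
    assume "harmonic_weyl (ppw H) Om"
    then show "loc_iso_conf_einstein (ppw H) Om" using harmonic_iff forward by simp
  qed
qed

theorem corollary3p5:
  fixes H :: "real^coord3 \<Rightarrow> real" and D :: "(real^coord3) set"
  assumes "open D" and "Cinf_on D H"
  shows "loc_iso_conf_einstein (ppw H) {p. proj3 p \<in> D} \<longleftrightarrow>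
         harmonic_weyl (ppw H) {p. proj3 p \<in> D}"
  using main[OF assms] .

end
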